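(* Let $E$ be a row-finite graph with a fixed choice of special edges. Let $R$ be a complete set of representatives of the $\sim_\infty$-equivalence classes of $X^\infty$ and $S$ a complete set of representatives of the $\sim_c$-equivalence classes of $X^c$. Then $\{(F_v,\phi_v),(F_x,\phi_x),(F_y,\phi_y)\mid v\in E^0,\ x\in R,\ y\in S\}$ is a complete set of representatives (each isomorphism class represented exactly once) for the isomorphism classes of nonempty connected extended representation graphs for $E$.
   Context: $E=(E^0,E^1,s,r)$ is a row-finite directed graph; a vertex is regular if it emits an edge; for each regular $v$ a fixed edge $e^v\in s^{-1}(v)$ is called special, all other edges nonspecial. Paths of length $n\ge1$ are words $y_1\dots y_n$ of edges with $r(y_i)=s(y_{i+1})$; paths of length $0$ are vertices ($s(v)=r(v)=v$). The double graph $E_d$ has vertices $E^0$ and edges $e$ (real) and $e^*$ (ghost) for $e\in E^1$, with $s_d(e)=s(e),r_d(e)=r(e),s_d(e^* )=r(e),r_d(e^* )=s(e)$. For $p=e_1\dots e_n$ set $p^*=e_n^*\dots e_1^*$. The set $X$ of (finite) basis paths consists of the paths in $E_d$: vertices; $p,p^*$ for paths $p$ of length $\ge1$ in $E$; $pq^*$ with $p=e_1\dots e_k,q=f_1\dots f_n$ of length $\ge1$ in $E$, $r(p)=r(q)$, and $e_k\ne f_n$ or $e_k=f_n$ nonspecial. $X_v=\{x\in X: s_d(x)=v\}$. $X^\infty$: left-infinite words $x=\dots x_3x_2x_1$ of edges of $E_d$ such that each $x_n\dots x_1$ is a basis path. $x\sim_\infty z$ iff there are $m,n\ge0$ with $\dots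 x_{m+2}x_{m+1}=\dots z_{n+2}z_{n+1}$. $X^c$: closed paths of length $\ge1$ in $E_d$ consisting only of real edges or only of ghost edges (equivalently finite basis paths $x$ with $x^2$ a basis path). $x_1\dots x_m\sim_c y_1\dots y_n$ iff $x_1\dots x_m=y_{k+1}\dots y_ny_1\dots y_k$ for some $1\le k\le n$. An extended representation graph for $E$ is a pair $(F,\phi)$, $F$ a directed graph, $\phi:F\to E_d$ a graph homomorphism, such that for every $w\in F^0$: (i) $w$ is a source or receives exactly one edge $f_w$; (ii) if $w$ is a source or $\phi(f_w)$ is a nonspecial real edge, $\phi$ maps $s^{-1}(w)$ bijectively onto $s_d^{-1}(\phi(w))$; (iii) if $\phi(f_w)$ is a special real edge, $\phi$ maps $s^{-1}(w)$ bijectively onto $s_d^{-1}(\phi(w))\setminus\{\phi(f_w)^*\}$; (iv) if $\phi(f_w)$ is a ghost edge, $\phi$ maps $s^{-1}(w)$ bijectively onto the ghost edges in $s_d^{-1}(\phi(w))$. An isomorphism $(F,\phi)\to(G,\psi)$ is a graph isomorphism $\alpha$ with $\psi\circ\alpha=\phi$. $F$ is connected if any two vertices are joined by a path when edge directions are ignored; nonempty if $F^0\ne\emptyset$. $(F_v,\phi_v)$ for $v\in E^0$: vertices $w_x$ ($x\in X_v$), edges $f_x$ ($x\in X_v\setminus\{v\}$) from $w_{x'}$ to $w_x$ where $x'$ is $x$ with its last edge removed ($x'=v$ if $|x|=1$); $\phi_v(w_x)=r_d(x)$, $\phi_v(f_x)=$ last edge of $x$. $(F_x,\phi_x)$ for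 $x=\dots x_2x_1\in X^\infty$: for $i\in\mathbb N$, $X_i$ = basis paths $y=y_1\dots y_n$, $n\ge1$, with $x_iy_1$ a basis path and $y_1\ne x_{i-1}$ if $i\ge2$. Vertices $w_i$ ($i\in\mathbb N$), $w_{i,y}$ ($y\in X_i$); edges $f_i$ from $w_{i+1}$ to $w_i$, and $f_{i,y}$ to $w_{i,y}$ from $w_i$ if $|y|=1$, from $w_{i,y_1\dots y_{n-1}}$ if $n\ge2$; $\phi_x(w_i)=r_d(x_i)$, $\phi_x(w_{i,y})=r_d(y)$, $\phi_x(f_i)=x_i$, $\phi_x(f_{i,y})=$ last edge of $y$. $(F_x,\phi_x)$ for $x=x_1\dots x_m\in X^c$: for $1\le i\le m$, $X_i$ = basis paths $y=y_1\dots y_n$, $n\ge1$, with $x_iy_1$ a basis path and $y_1\ne x_{i+1}$ ($x_{m+1}=x_1$). Vertices $w_i$ ($1\le i\le m$), $w_{i,y}$ ($y\in X_i$); edges $f_i$ from $w_{i-1}$ to $w_i$ ($w_0=w_m$), and $f_{i,y}$ as before; $\phi_x$ defined by the same formulas. *)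

theory Defs
  imports Main
begin

record ('a,'b) egraph =
  V0 :: "'a set"
  V1 :: "'b set"
  esrc :: "'b \<Rightarrow> 'a"
  erng :: "'b \<Rightarrow> 'a"

definition egraph_wf :: "('a,'b) egraph \<Rightarrow> bool" where
  "egraph_wf E \<longleftrightarrow> (\<forall>e\<in>V1 E. esrc E e \<in> V0 E \<and> erng E e \<in> V0 E)"

definition row_finite :: "('a,'b) egraph \<Rightarrow> bool" where
  "row_finite E \<longleftrightarrow> (\<forall>v\<in>V0 E. finite {e\<in>V1 E. esrc E e = v})"

definition regular :: "('a,'b) egraph \<Rightarrow> 'a \<Rightarrow> bool" where
  "regular E v \<longleftrightarrow> (\<exists>e\<in>V1 E. esrc E e = v)"

definition special_choice :: "('a,'b) egraph \<Rightarrow> ('a \<Rightarrow> 'b) \<Rightarrow> bool" where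
  "special_choice E sp \<longleftrightarrow>
     (\<forall>v\<in>V0 E. regular E v \<longrightarrow> sp v \<in> V1 E \<and> esrc E (sp v) = v)"

definition special :: "('a,'b) egraph \<Rightarrow> ('a \<Rightarrow> 'b) \<Rightarrow> 'b \<Rightarrow> bool" where
  "special E sp e \<longleftrightarrow> e \<in> V1 E \<and> e = sp (esrc E e)"

text \<open>Edges of the double graph: real edges e and ghost edges e*.\<close>
datatype 'b dedge = Real 'b | Ghost 'b

fun dsrc :: "('a,'b) egraph \<Rightarrow> 'b dedge \<Rightarrow> 'a" where
  "dsrc E (Real e) = esrc E e"
| "dsrc E (Ghost e) = erng E e"

fun drng :: "('a,'b) egraph \<Rightarrow> 'b dedge \<Rightarrow> 'a" where
  "drng E (Real e) = erng E e"
| "drng E (Ghost e) = esrc E e"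

definition dedges :: "('a,'b) egraph \<Rightarrow> 'b dedge set" where
  "dedges E = Real ` V1 E \<union> Ghost ` V1 E"

definition epath :: "('a,'b) egraph \<Rightarrow> 'b list \<Rightarrow> bool" where
  "epath E p \<longleftrightarrow> p \<noteq> [] \<and> set p \<subseteq> V1 E \<and> successively (\<lambda>e f. erng E e = esrc E f) p"

definition dpath :: "('a,'b) egraph \<Rightarrow> 'b dedge list \<Rightarrow> bool" where
  "dpath E p \<longleftrightarrow> p \<noteq> [] \<and> set p \<subseteq> dedges E \<and> successively (\<lambda>a b. drng E a = dsrc E b) p"

definition gstar :: "'b list \<Rightarrow> 'b dedge list" where
  "gstar q = map Ghost (rev q)"

definition basis_word :: "('a,'b) egraph \<Rightarrow> ('a \<Rightarrow> 'b) \<Rightarrow> 'b dedge list \<Rightarrow> bool" where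
  "basis_word E sp w \<longleftrightarrow>
     (\<exists>p. epath E p \<and> w = map Real p) \<or>
     (\<exists>p. epath E p \<and> w = gstar p) \<or>
     (\<exists>p q. epath E p \<and> epath E q \<and> erng E (last p) = erng E (last q) \<and>
            (last p \<noteq> last q \<or> \<not> special E sp (last p)) \<and> w = map Real p @ gstar q)"

text \<open>The set X of basis paths; a basis path is represented by its source vertex
  together with its word of edges (empty word = the vertex itself).\<close>
definition basis_paths :: "('a,'b) egraph \<Rightarrow> ('a \<Rightarrow> 'b) \<Rightarrow> ('a \<times> 'b dedge list) set" where
  "basis_paths E sp = {(v, []) | v. v \<in> V0 E} \<union> {(dsrc E (hd w), w) | w. basis_word E sp w}"

definition Xv :: "('a,'b) egraph \<Rightarrow> ('a \<Rightarrow> 'b) \<Rightarrow> 'a \<Rightarrow> ('a \<times> 'b dedge list) set" where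
  "Xv E sp v = {x \<in> basis_paths E sp. fst x = v}"

definition bp_rng :: "('a,'b) egraph \<Rightarrow> ('a \<times> 'b dedge list) \<Rightarrow> 'a" where
  "bp_rng E x = (if snd x = [] then fst x else drng E (last (snd x)))"

text \<open>Left-infinite words ... x_3 x_2 x_1 are encoded as functions x with
  x 0 = x_1, x 1 = x_2, etc.; x_n ... x_1 is the list [x (n-1), ..., x 0].\<close>
definition Xinf :: "('a,'b) egraph \<Rightarrow> ('a \<Rightarrow> 'b) \<Rightarrow> (nat \<Rightarrow> 'b dedge) set" where
  "Xinf E sp = {x. \<forall>n\<ge>1. basis_word E sp (map x (rev [0..<n]))}"

definition inf_equiv :: "(nat \<Rightarrow> 'b dedge) \<Rightarrow> (nat \<Rightarrow> 'b dedge) \<Rightarrow> bool" where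
  "inf_equiv x z \<longleftrightarrow> (\<exists>m n. \<forall>k. x (m + k) = z (n + k))"

definition Xc :: "('a,'b) egraph \<Rightarrow> 'b dedge list set" where
  "Xc E = {x. dpath E x \<and> dsrc E (hd x) = drng E (last x) \<and>
              ((\<exists>p. x = map Real p) \<or> (\<exists>p. x = map Ghost p))}"

definition cyc_equiv :: "'b dedge list \<Rightarrow> 'b dedge list \<Rightarrow> bool" where
  "cyc_equiv x y \<longleftrightarrow> (\<exists>k. 1 \<le> k \<and> k \<le> length y \<and> x = drop k y @ take k y)"

record ('v,'e) dgraph =
  verts :: "'v set"
  arcs :: "'e set"
  tail :: "'e \<Rightarrow> 'v"
  head :: "'e \<Rightarrow> 'v"

definition in_arcs :: "('v,'e) dgraph \<Rightarrow> 'v \<Rightarrow> 'e set" where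
  "in_arcs F w = {f \<in> arcs F. head F f = w}"

definition out_arcs :: "('v,'e) dgraph \<Rightarrow> 'v \<Rightarrow> 'e set" where
  "out_arcs F w = {f \<in> arcs F. tail F f = w}"

definition dgraph_wf :: "('v,'e) dgraph \<Rightarrow> bool" where
  "dgraph_wf F \<longleftrightarrow> (\<forall>f\<in>arcs F. tail F f \<in> verts F \<and> head F f \<in> verts F)"

definition dhom :: "('a,'b) egraph \<Rightarrow> ('v,'e) dgraph \<Rightarrow> ('v \<Rightarrow> 'a) \<Rightarrow> ('e \<Rightarrow> 'b dedge) \<Rightarrow> bool" where
  "dhom E F phiV phiA \<longleftrightarrow>
     (\<forall>w\<in>verts F. phiV w \<in> V0 E) \<and>
     (\<forall>f\<in>arcs F. phiA f \<in> dedges E \<and> dsrc E (phiA f) = phiV (tail F f) \<and>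
                  drng E (phiA f) = phiV (head F f))"

definition ext_rep_graph ::
  "('a,'b) egraph \<Rightarrow> ('a \<Rightarrow> 'b) \<Rightarrow> ('v,'e) dgraph \<Rightarrow> ('v \<Rightarrow> 'a) \<Rightarrow> ('e \<Rightarrow> 'b dedge) \<Rightarrow> bool" where
  "ext_rep_graph E sp F phiV phiA \<longleftrightarrow>
     dgraph_wf F \<and> dhom E F phiV phiA \<and>
     (\<forall>w\<in>verts F.
        (in_arcs F w = {} \<or> (\<exists>f. in_arcs F w = {f})) \<and>
        ((in_arcs F w = {} \<or> (\<exists>f e. in_arcs F w = {f} \<and> phiA f = Real e \<and> \<not> special E sp e)) \<longrightarrow>
           bij_betw phiA (out_arcs F w) {d \<in> dedges E. dsrc E d = phiV w}) \<and>
        (\<forall>f e. in_arcs F w = {f} \<and> phiA f = Real e \<and> special E sp e \<longrightarrow>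
           bij_betw phiA (out_arcs F w) ({d \<in> dedges E. dsrc E d = phiV w} - {Ghost e})) \<and>
        (\<forall>f e. in_arcs F w = {f} \<and> phiA f = Ghost e \<longrightarrow>
           bij_betw phiA (out_arcs F w) {Ghost e' | e'. e' \<in> V1 E \<and> dsrc E (Ghost e') = phiV w}))"

definition dg_connected :: "('v,'e) dgraph \<Rightarrow> bool" where
  "dg_connected F \<longleftrightarrow>
     (\<forall>u\<in>verts F. \<forall>v\<in>verts F.
        (u, v) \<in> ({(tail F f, head F f) | f. f \<in> arcs F} \<union> {(head F f, tail F f) | f. f \<in> arcs F})\<^sup>*)"

definition ne_conn_erg ::
  "('a,'b) egraph \<Rightarrow> ('a \<Rightarrow> 'b) \<Rightarrow> ('v,'e) dgraph \<Rightarrow> ('v \<Rightarrow> 'a) \<Rightarrow> ('e \<Rightarrow> 'b dedge) \<Rightarrow> bool" where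
  "ne_conn_erg E sp F phiV phiA \<longleftrightarrow>
     ext_rep_graph E sp F phiV phiA \<and> dg_connected F \<and> verts F \<noteq> {}"

definition rep_iso ::
  "('v1,'e1) dgraph \<Rightarrow> ('v1 \<Rightarrow> 'a) \<Rightarrow> ('e1 \<Rightarrow> 'c) \<Rightarrow>
   ('v2,'e2) dgraph \<Rightarrow> ('v2 \<Rightarrow> 'a) \<Rightarrow> ('e2 \<Rightarrow> 'c) \<Rightarrow> bool" where
  "rep_iso F phiV phiA G psiV psiA \<longleftrightarrow>
     (\<exists>aV aA. bij_betw aV (verts F) (verts G) \<and> bij_betw aA (arcs F) (arcs G) \<and>
        (\<forall>f\<in>arcs F. tail G (aA f) = aV (tail F f) \<and> head G (aA f) = aV (head F f)) \<and>
        (\<forall>w\<in>verts F. psiV (aV w) = phiV w) \<and>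
        (\<forall>f\<in>arcs F. psiA (aA f) = phiA f))"

text \<open>F_v: vertex w_x and edge f_x are both encoded by the basis path x.\<close>
definition Fv :: "('a,'b) egraph \<Rightarrow> ('a \<Rightarrow> 'b) \<Rightarrow> 'a \<Rightarrow>
                  ('a \<times> 'b dedge list, 'a \<times> 'b dedge list) dgraph" where
  "Fv E sp v = \<lparr> verts = Xv E sp v, arcs = {x \<in> Xv E sp v. snd x \<noteq> []},
                 tail = (\<lambda>x. (fst x, butlast (snd x))), head = (\<lambda>x. x) \<rparr>"

definition Fv_phiV :: "('a,'b) egraph \<Rightarrow> ('a \<times> 'b dedge list) \<Rightarrow> 'a" where
  "Fv_phiV E = bp_rng E"

definition Fv_phiA :: "('a \<times> 'b dedge list) \<Rightarrow> 'b dedge" where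
  "Fv_phiA x = last (snd x)"

text \<open>F_x for x in X^infty (0-indexed: index i stands for the paper's i+1).
  Vertex (i,[]) is w_i, vertex (i,y) with y nonempty is w_{i,y}; the edge (i,[]) is
  f_i and the edge (i,y) is f_{i,y}.\<close>
definition Xi_inf :: "('a,'b) egraph \<Rightarrow> ('a \<Rightarrow> 'b) \<Rightarrow> (nat \<Rightarrow> 'b dedge) \<Rightarrow> nat \<Rightarrow> 'b dedge list set" where
  "Xi_inf E sp x i = {y. basis_word E sp y \<and> basis_word E sp [x i, hd y] \<and>
                         (0 < i \<longrightarrow> hd y \<noteq> x (i - 1))}"

definition Finf :: "('a,'b) egraph \<Rightarrow> ('a \<Rightarrow> 'b) \<Rightarrow> (nat \<Rightarrow> 'b dedge) \<Rightarrow>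
                    (nat \<times> 'b dedge list, nat \<times> 'b dedge list) dgraph" where
  "Finf E sp x =
     \<lparr> verts = {(i, []) | i. True} \<union> {(i, y) | i y. y \<in> Xi_inf E sp x i},
       arcs = {(i, []) | i. True} \<union> {(i, y) | i y. y \<in> Xi_inf E sp x i},
       tail = (\<lambda>(i, y). if y = [] then (Suc i, []) else (i, butlast y)),
       head = (\<lambda>p. p) \<rparr>"

definition Finf_phiV :: "('a,'b) egraph \<Rightarrow> (nat \<Rightarrow> 'b dedge) \<Rightarrow> nat \<times> 'b dedge list \<Rightarrow> 'a" where
  "Finf_phiV E x = (\<lambda>(i, y). if y = [] then drng E (x i) else drng E (last y))"

definition Finf_phiA :: "(nat \<Rightarrow> 'b dedge) \<Rightarrow> nat \<times> 'b dedge list \<Rightarrow> 'b dedge" where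
  "Finf_phiA x = (\<lambda>(i, y). if y = [] then x i else last y)"

text \<open>F_x for x = x_1...x_m in X^c (0-indexed: position i stands for the paper's i+1).\<close>
definition Xi_c :: "('a,'b) egraph \<Rightarrow> ('a \<Rightarrow> 'b) \<Rightarrow> 'b dedge list \<Rightarrow> nat \<Rightarrow> 'b dedge list set" where
  "Xi_c E sp x i = {y. basis_word E sp y \<and> basis_word E sp [x ! i, hd y] \<and>
                       hd y \<noteq> x ! (Suc i mod length x)}"

definition Fc :: "('a,'b) egraph \<Rightarrow> ('a \<Rightarrow> 'b) \<Rightarrow> 'b dedge list \<Rightarrow>
                  (nat \<times> 'b dedge list, nat \<times> 'b dedge list) dgraph" where
  "Fc E sp x =
     \<lparr> verts = {(i, []) | i. i < length x} \<union> {(i, y) | i y. i < length x \<and> y \<in> Xi_c E sp x i},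
       arcs = {(i, []) | i. i < length x} \<union> {(i, y) | i y. i < length x \<and> y \<in> Xi_c E sp x i},
       tail = (\<lambda>(i, y). if y = [] then ((i + length x - 1) mod length x, []) else (i, butlast y)),
       head = (\<lambda>p. p) \<rparr>"

definition Fc_phiV :: "('a,'b) egraph \<Rightarrow> 'b dedge list \<Rightarrow> nat \<times> 'b dedge list \<Rightarrow> 'a" where
  "Fc_phiV E x = (\<lambda>(i, y). if y = [] then drng E (x ! i) else drng E (last y))"

definition Fc_phiA :: "'b dedge list \<Rightarrow> nat \<times> 'b dedge list \<Rightarrow> 'b dedge" where
  "Fc_phiA x = (\<lambda>(i, y). if y = [] then x ! i else last y)"

end

theory Submission
  imports Defs
begin


definition pok :: "('a,'b) egraph \<Rightarrow> ('a \<Rightarrow> 'b) \<Rightarrow> 'b dedge \<Rightarrow> 'b dedge \<Rightarrow> bool" where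
  "pok E sp c d \<longleftrightarrow> c \<in> dedges E \<and> d \<in> dedges E \<and> drng E c = dsrc E d \<and>
     (case (c, d) of (Real e, Real f) \<Rightarrow> True | (Ghost e, Ghost f) \<Rightarrow> True
        | (Real e, Ghost f) \<Rightarrow> \<not> (e = f \<and> special E sp e) | (Ghost e, Real f) \<Rightarrow> False)"

definition chainw :: "('a,'b) egraph \<Rightarrow> ('a \<Rightarrow> 'b) \<Rightarrow> 'b dedge list \<Rightarrow> bool" where
  "chainw E sp w \<longleftrightarrow> w \<noteq> [] \<and> set w \<subseteq> dedges E \<and> successively (pok E sp) w"

lemma epath_Cons: "epath E (e # p) \<longleftrightarrow> e \<in> V1 E \<and> (p = [] \<or> (epath E p \<and> erng E e = esrc E (hd p)))"
  unfolding epath_def by (auto simp: successively_Cons)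

lemma epath_snoc: "epath E (p @ [e]) \<longleftrightarrow> e \<in> V1 E \<and> (p = [] \<or> (epath E p \<and> erng E (last p) = esrc E e))"
  unfolding epath_def by (auto simp: successively_append_iff)

lemma basis_chain1: "basis_word E sp w \<Longrightarrow> chainw E sp w"
proof -
  assume "basis_word E sp w"
  then consider (a) p where "epath E p" "w = map Real p" | (b) p where "epath E p" "w = gstar p"
    | (c) p q where "epath E p" "epath E q" "erng E (last p) = erng E (last q)"
            "last p \<noteq> last q \<or> \<not> special E sp (last p)" "w = map Real p @ gstar q"
    unfolding basis_word_def by blast
  then show ?thesis
  proof cases
    case a
    then show ?thesis unfolding chainw_def epath_def dedges_def
      by (auto simp: successively_map pok_def dedges_def elim!: successively_mono)
  next
    case b
    then show ?thesis unfolding chainw_def epath_def dedges_def gstar_def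
      by (auto simp: successively_map pok_def dedges_def elim!: successively_mono)
  next
    case c
    then have "last p \<in> V1 E" "last q \<in> V1 E" by (auto simp: epath_def)
    with c show ?thesis unfolding chainw_def epath_def dedges_def gstar_def
      by (auto simp: successively_map successively_append_iff pok_def dedges_def last_map hd_map hd_rev
               elim!: successively_mono)
  qed
qed

lemma basis_chain2: "chainw E sp w \<Longrightarrow> basis_word E sp w"
proof (induction w)
  case Nil then show ?case by (simp add: chainw_def)
next
  case (Cons c w)
  show ?case
  proof (cases "w = []")
    case True
    then have "c \<in> dedges E" using Cons.prems by (simp add: chainw_def)
    then obtain e where e: "e \<in> V1 E" "c = Real e \<or> c = Ghost e" unfolding dedges_def by blast
    from e(2) show ?thesis
    proof
      assume "c = Real e" then show ?thesis unfolding basis_word_def using True e(1)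
        by (intro disjI1 exI[of _ "[e]"]) (auto simp: epath_def)
    next
      assume "c = Ghost e" then show ?thesis unfolding basis_word_def using True e(1)
        by (intro disjI2 disjI1 exI[of _ "[e]"]) (auto simp: epath_def gstar_def)
    qed
  next
    case False
    have cw: "chainw E sp w" and pk: "pok E sp c (hd w)" using Cons.prems False
      by (auto simp: chainw_def successively_Cons)
    have bw: "basis_word E sp w" using Cons.IH cw by blast
    then consider (a) p where "epath E p" "w = map Real p" | (b) p where "epath E p" "w = gstar p"
      | (c) p q where "epath E p" "epath E q" "erng E (last p) = erng E (last q)"
            "last p \<noteq> last q \<or> \<not> special E sp (last p)" "w = map Real p @ gstar q"
      unfolding basis_word_def by blast
    then show ?thesis
    proof cases
      case a
      then obtain e where ce: "c = Real e" and "p \<noteq> []" using pk False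
        by (cases c; cases p) (auto simp: pok_def epath_def)
      then have "epath E (e # p)" using a pk
        by (cases p) (auto simp: epath_Cons pok_def dedges_def)
      then show ?thesis unfolding basis_word_def using a ce by (auto intro!: exI[of _ "e # p"])
    next
      case b
      have pne: "p \<noteq> []" using b by (auto simp: epath_def)
      have hw: "hd w = Ghost (last p)" using b pne by (simp add: gstar_def hd_map hd_rev)
      show ?thesis
      proof (cases c)
        case (Real e)
        have "epath E [e]" using pk Real by (auto simp: epath_def pok_def dedges_def)
        moreover have "erng E e = erng E (last p)" "last p \<noteq> e \<or> \<not> special E sp e"
          using pk Real hw by (auto simp: pok_def)
        ultimately show ?thesis unfolding basis_word_def using b Real
          by (intro disjI2) (rule exI[of _ "[e]"], rule exI[of _ p], auto)
      next
        case (Ghost e)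
        have "epath E (p @ [e])" using pk Ghost hw b pne
          by (auto simp: epath_snoc pok_def dedges_def)
        moreover have "c # w = gstar (p @ [e])" using b Ghost by (simp add: gstar_def)
        ultimately show ?thesis unfolding basis_word_def by blast
      qed
    next
      case c
      have pne: "p \<noteq> []" using c by (auto simp: epath_def)
      obtain e where ce: "c = Real e" using pk c pne
        by (cases c; cases p) (auto simp: pok_def)
      have "epath E (e # p)" using c pk pne ce
        by (cases p) (auto simp: epath_Cons pok_def dedges_def)
      moreover have "last (e # p) = last p" using pne by simp
      ultimately show ?thesis unfolding basis_word_def using c ce
        by (intro disjI2 disjI2) (rule exI[of _ "e # p"], rule exI[of _ q], auto)
    qed
  qed
qed

lemma basis_chain: "basis_word E sp w \<longleftrightarrow> chainw E sp w"
  using basis_chain1 basis_chain2 by blast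

lemma basis_ne: "basis_word E sp w \<Longrightarrow> w \<noteq> []"
  by (simp add: basis_chain chainw_def)

lemma basis1: "basis_word E sp [c] \<longleftrightarrow> c \<in> dedges E"
  by (simp add: basis_chain chainw_def)

lemma basis2: "basis_word E sp [c, d] \<longleftrightarrow> pok E sp c d"
  by (auto simp: basis_chain chainw_def pok_def)

lemma basis_snoc: "basis_word E sp (w @ [d]) \<longleftrightarrow>
   (w = [] \<and> d \<in> dedges E) \<or> (w \<noteq> [] \<and> basis_word E sp w \<and> basis_word E sp [last w, d])"
  by (auto simp: basis_chain chainw_def successively_append_iff basis2 pok_def)

lemma basis_Cons: "basis_word E sp (c # w) \<longleftrightarrow>
   (w = [] \<and> c \<in> dedges E) \<or> (w \<noteq> [] \<and> basis_word E sp w \<and> basis_word E sp [c, hd w])"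
  by (auto simp: basis_chain chainw_def successively_Cons basis2 pok_def)

lemma basis_set: "basis_word E sp w \<Longrightarrow> set w \<subseteq> dedges E"
  by (simp add: basis_chain chainw_def)

lemma basis_butlast: "basis_word E sp w \<Longrightarrow> butlast w \<noteq> [] \<Longrightarrow> basis_word E sp (butlast w)"
  by (metis append_butlast_last_id basis_ne basis_snoc)



definition olbl :: "('a,'b) egraph \<Rightarrow> ('a \<Rightarrow> 'b) \<Rightarrow> ('v,'e) dgraph \<Rightarrow> ('v \<Rightarrow> 'a) \<Rightarrow> ('e \<Rightarrow> 'b dedge) \<Rightarrow> 'v \<Rightarrow> 'b dedge set" where
  "olbl E sp F phiV phiA w = {d \<in> dedges E. dsrc E d = phiV w \<and> (\<forall>f\<in>in_arcs F w. basis_word E sp [phiA f, d])}"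

lemma SL1: "e \<in> V1 E \<Longrightarrow> \<not> special E sp e \<Longrightarrow>
  {d \<in> dedges E. dsrc E d = erng E e \<and> basis_word E sp [Real e, d]} = {d \<in> dedges E. dsrc E d = erng E e}"
  unfolding basis2 pok_def by (rule set_eqI, case_tac x) (auto simp: dedges_def)

lemma SL2: "e \<in> V1 E \<Longrightarrow> special E sp e \<Longrightarrow>
  {d \<in> dedges E. dsrc E d = erng E e \<and> basis_word E sp [Real e, d]} = {d \<in> dedges E. dsrc E d = erng E e} - {Ghost e}"
  unfolding basis2 pok_def by (rule set_eqI, case_tac x) (auto simp: dedges_def)

lemma SL3: "e \<in> V1 E \<Longrightarrow>
  {d \<in> dedges E. dsrc E d = esrc E e \<and> basis_word E sp [Ghost e, d]} = {Ghost e' | e'. e' \<in> V1 E \<and> dsrc E (Ghost e') = esrc E e}"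
  unfolding basis2 pok_def by (rule set_eqI, case_tac x) (auto simp: dedges_def)

lemma vertex_iff:
  assumes hom: "dhom E F phiV phiA" and w: "w \<in> verts F"
    and ia: "in_arcs F w = {} \<or> (\<exists>f. in_arcs F w = {f})"
  shows "(((in_arcs F w = {} \<or> (\<exists>f e. in_arcs F w = {f} \<and> phiA f = Real e \<and> \<not> special E sp e)) \<longrightarrow>
           bij_betw phiA (out_arcs F w) {d \<in> dedges E. dsrc E d = phiV w}) \<and>
        (\<forall>f e. in_arcs F w = {f} \<and> phiA f = Real e \<and> special E sp e \<longrightarrow>
           bij_betw phiA (out_arcs F w) ({d \<in> dedges E. dsrc E d = phiV w} - {Ghost e})) \<and>
        (\<forall>f e. in_arcs F w = {f} \<and> phiA f = Ghost e \<longrightarrow>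
           bij_betw phiA (out_arcs F w) {Ghost e' | e'. e' \<in> V1 E \<and> dsrc E (Ghost e') = phiV w}))
      \<longleftrightarrow> bij_betw phiA (out_arcs F w) (olbl E sp F phiV phiA w)"
  using ia
proof
  assume "in_arcs F w = {}"
  then show ?thesis by (simp add: olbl_def)
next
  assume "\<exists>f. in_arcs F w = {f}"
  then obtain f where f: "in_arcs F w = {f}" by blast
  then have fa: "f \<in> arcs F" "head F f = w" by (auto simp: in_arcs_def)
  then have fd: "phiA f \<in> dedges E" "drng E (phiA f) = phiV w" using hom by (auto simp: dhom_def)
  then obtain e where e: "e \<in> V1 E" "phiA f = Real e \<or> phiA f = Ghost e" by (auto simp: dedges_def)
  have ol: "olbl E sp F phiV phiA w = {d \<in> dedges E. dsrc E d = phiV w \<and> basis_word E sp [phiA f, d]}"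
    using f by (simp add: olbl_def)
  from e(2) show ?thesis
  proof
    assume r: "phiA f = Real e"
    show ?thesis
    proof (cases "special E sp e")
      case True
      then show ?thesis using SL2[OF e(1) True] f r fd ol by auto
    next
      case False
      then show ?thesis using SL1[OF e(1) False] f r fd ol by auto
    qed
  next
    assume g: "phiA f = Ghost e"
    then show ?thesis using SL3[OF e(1), of sp] f fd ol by auto
  qed
qed

lemma erg_iff: "ext_rep_graph E sp F phiV phiA \<longleftrightarrow> dgraph_wf F \<and> dhom E F phiV phiA \<and>
   (\<forall>w\<in>verts F. (in_arcs F w = {} \<or> (\<exists>f. in_arcs F w = {f})) \<and>
      bij_betw phiA (out_arcs F w) (olbl E sp F phiV phiA w))"
  unfolding ext_rep_graph_def
proof (intro iffI)
  assume H: "dgraph_wf F \<and> dhom E F phiV phiA \<and> (\<forall>w\<in>verts F.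
        (in_arcs F w = {} \<or> (\<exists>f. in_arcs F w = {f})) \<and>
        ((in_arcs F w = {} \<or> (\<exists>f e. in_arcs F w = {f} \<and> phiA f = Real e \<and> \<not> special E sp e)) \<longrightarrow>
           bij_betw phiA (out_arcs F w) {d \<in> dedges E. dsrc E d = phiV w}) \<and>
        (\<forall>f e. in_arcs F w = {f} \<and> phiA f = Real e \<and> special E sp e \<longrightarrow>
           bij_betw phiA (out_arcs F w) ({d \<in> dedges E. dsrc E d = phiV w} - {Ghost e})) \<and>
        (\<forall>f e. in_arcs F w = {f} \<and> phiA f = Ghost e \<longrightarrow>
           bij_betw phiA (out_arcs F w) {Ghost e' | e'. e' \<in> V1 E \<and> dsrc E (Ghost e') = phiV w}))"
  have hom: "dhom E F phiV phiA" using H by (rule conjunct1[OF conjunct2])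
  show "dgraph_wf F \<and> dhom E F phiV phiA \<and> (\<forall>w\<in>verts F. (in_arcs F w = {} \<or> (\<exists>f. in_arcs F w = {f})) \<and>
      bij_betw phiA (out_arcs F w) (olbl E sp F phiV phiA w))"
  proof (intro conjI ballI)
    show "dgraph_wf F" using H by (rule conjunct1)
    show "dhom E F phiV phiA" by (rule hom)
    fix w assume w: "w \<in> verts F"
    note X = H[THEN conjunct2, THEN conjunct2, THEN bspec, OF w]
    show ia: "in_arcs F w = {} \<or> (\<exists>f. in_arcs F w = {f})" using X by (rule conjunct1)
    show "bij_betw phiA (out_arcs F w) (olbl E sp F phiV phiA w)"
      using vertex_iff[OF hom w ia, THEN iffD1, OF X[THEN conjunct2]] .
  qed
next
  assume H: "dgraph_wf F \<and> dhom E F phiV phiA \<and> (\<forall>w\<in>verts F. (in_arcs F w = {} \<or> (\<exists>f. in_arcs F w = {f})) \<and>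
      bij_betw phiA (out_arcs F w) (olbl E sp F phiV phiA w))"
  have hom: "dhom E F phiV phiA" using H by (rule conjunct1[OF conjunct2])
  show "dgraph_wf F \<and> dhom E F phiV phiA \<and> (\<forall>w\<in>verts F.
        (in_arcs F w = {} \<or> (\<exists>f. in_arcs F w = {f})) \<and>
        ((in_arcs F w = {} \<or> (\<exists>f e. in_arcs F w = {f} \<and> phiA f = Real e \<and> \<not> special E sp e)) \<longrightarrow>
           bij_betw phiA (out_arcs F w) {d \<in> dedges E. dsrc E d = phiV w}) \<and>
        (\<forall>f e. in_arcs F w = {f} \<and> phiA f = Real e \<and> special E sp e \<longrightarrow>
           bij_betw phiA (out_arcs F w) ({d \<in> dedges E. dsrc E d = phiV w} - {Ghost e})) \<and>
        (\<forall>f e. in_arcs F w = {f} \<and> phiA f = Ghost e \<longrightarrow>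
           bij_betw phiA (out_arcs F w) {Ghost e' | e'. e' \<in> V1 E \<and> dsrc E (Ghost e') = phiV w}))"
  proof (intro conjI ballI)
    show "dgraph_wf F" using H by (rule conjunct1)
    show "dhom E F phiV phiA" by (rule hom)
    fix w assume w: "w \<in> verts F"
    note X = H[THEN conjunct2, THEN conjunct2, THEN bspec, OF w]
    show ia: "in_arcs F w = {} \<or> (\<exists>f. in_arcs F w = {f})" using X by (rule conjunct1)
    note Y = vertex_iff[OF hom w ia, THEN iffD2, OF X[THEN conjunct2]]
    show "(in_arcs F w = {} \<or> (\<exists>f e. in_arcs F w = {f} \<and> phiA f = Real e \<and> \<not> special E sp e)) \<longrightarrow>
           bij_betw phiA (out_arcs F w) {d \<in> dedges E. dsrc E d = phiV w}" using Y by (rule conjunct1)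
    show "\<forall>f e. in_arcs F w = {f} \<and> phiA f = Real e \<and> special E sp e \<longrightarrow>
           bij_betw phiA (out_arcs F w) ({d \<in> dedges E. dsrc E d = phiV w} - {Ghost e})"
      using Y by (rule conjunct1[OF conjunct2])
    show "\<forall>f e. in_arcs F w = {f} \<and> phiA f = Ghost e \<longrightarrow>
           bij_betw phiA (out_arcs F w) {Ghost e' | e'. e' \<in> V1 E \<and> dsrc E (Ghost e') = phiV w}"
      using Y by (rule conjunct2[OF conjunct2])
  qed
qed

context
  fixes E :: "('a,'b) egraph" and sp and F :: "('v,'e) dgraph" and phiV phiA
  assumes erg: "ext_rep_graph E sp F phiV phiA"
begin

lemma erg_wf: "dgraph_wf F" using erg by (simp add: erg_iff)
lemma erg_hom: "dhom E F phiV phiA" using erg by (simp add: erg_iff)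

lemma erg_arc: "f \<in> arcs F \<Longrightarrow> tail F f \<in> verts F \<and> head F f \<in> verts F \<and> phiA f \<in> dedges E \<and>
   dsrc E (phiA f) = phiV (tail F f) \<and> drng E (phiA f) = phiV (head F f)"
  using erg_wf erg_hom by (auto simp: dgraph_wf_def dhom_def)

lemma erg_V: "w \<in> verts F \<Longrightarrow> phiV w \<in> V0 E"
  using erg_hom by (auto simp: dhom_def)

lemma erg_in: "w \<in> verts F \<Longrightarrow> in_arcs F w = {} \<or> (\<exists>f. in_arcs F w = {f})"
  using erg by (simp add: erg_iff)

lemma erg_in1: assumes "f \<in> in_arcs F w" shows "in_arcs F w = {f}"
proof -
  have "w \<in> verts F" using assms erg_arc[of f] unfolding in_arcs_def by auto
  then have "in_arcs F w = {} \<or> (\<exists>f. in_arcs F w = {f})" by (rule erg_in)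
  then show ?thesis using assms by auto
qed

lemma erg_in2: "f \<in> arcs F \<Longrightarrow> in_arcs F (head F f) = {f}"
  using erg_in1 by (auto simp: in_arcs_def)

lemma erg_bij: "w \<in> verts F \<Longrightarrow> bij_betw phiA (out_arcs F w) (olbl E sp F phiV phiA w)"
  using erg by (simp add: erg_iff)

lemma erg_det: "w \<in> verts F \<Longrightarrow> f \<in> out_arcs F w \<Longrightarrow> g \<in> out_arcs F w \<Longrightarrow> phiA f = phiA g \<Longrightarrow> f = g"
  using erg_bij[of w] by (auto simp: bij_betw_def inj_on_def)

lemma erg_ex: assumes "w \<in> verts F" "d \<in> olbl E sp F phiV phiA w" shows "\<exists>g\<in>out_arcs F w. phiA g = d"
proof -
  have "d \<in> phiA ` out_arcs F w" using erg_bij[OF assms(1)] assms(2) by (simp add: bij_betw_def)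
  then show ?thesis by blast
qed

lemma erg_lbl: "w \<in> verts F \<Longrightarrow> g \<in> out_arcs F w \<Longrightarrow> phiA g \<in> olbl E sp F phiV phiA w"
  using erg_bij[of w] by (auto simp: bij_betw_def)

end

lemma olbl_single: "in_arcs F w = {f} \<Longrightarrow>
   olbl E sp F phiV phiA w = {d \<in> dedges E. dsrc E d = phiV w \<and> basis_word E sp [phiA f, d]}"
  by (simp add: olbl_def)

lemma olbl_empty: "in_arcs F w = {} \<Longrightarrow>
   olbl E sp F phiV phiA w = {d \<in> dedges E. dsrc E d = phiV w}"
  by (simp add: olbl_def)

lemma rep_iso_trans:
  assumes "rep_iso F phiV phiA G psiV psiA" "rep_iso G psiV psiA H chiV chiA"
  shows "rep_iso F phiV phiA H chiV chiA"
proof -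
  obtain aV aA where a: "bij_betw aV (verts F) (verts G)" "bij_betw aA (arcs F) (arcs G)"
    "\<forall>f\<in>arcs F. tail G (aA f) = aV (tail F f) \<and> head G (aA f) = aV (head F f)"
    "\<forall>w\<in>verts F. psiV (aV w) = phiV w" "\<forall>f\<in>arcs F. psiA (aA f) = phiA f"
    using assms(1) unfolding rep_iso_def by blast
  obtain bV bA where b: "bij_betw bV (verts G) (verts H)" "bij_betw bA (arcs G) (arcs H)"
    "\<forall>f\<in>arcs G. tail H (bA f) = bV (tail G f) \<and> head H (bA f) = bV (head G f)"
    "\<forall>w\<in>verts G. chiV (bV w) = psiV w" "\<forall>f\<in>arcs G. chiA (bA f) = psiA f"
    using assms(2) unfolding rep_iso_def by blast
  have bj: "bij_betw (bV \<circ> aV) (verts F) (verts H)" "bij_betw (bA \<circ> aA) (arcs F) (arcs H)"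
    using a b bij_betw_trans by blast+
  have aF: "\<And>f. f \<in> arcs F \<Longrightarrow> aA f \<in> arcs G" "\<And>w. w \<in> verts F \<Longrightarrow> aV w \<in> verts G"
    using a(1,2) bij_betwE by blast+
  moreover have "\<forall>f\<in>arcs F. tail H ((bA \<circ> aA) f) = (bV \<circ> aV) (tail F f) \<and> head H ((bA \<circ> aA) f) = (bV \<circ> aV) (head F f)"
    using a b aF by auto
  moreover have "\<forall>w\<in>verts F. chiV ((bV \<circ> aV) w) = phiV w" "\<forall>f\<in>arcs F. chiA ((bA \<circ> aA) f) = phiA f"
    using a b aF by auto
  ultimately show ?thesis using bj unfolding rep_iso_def by blast
qed

lemma rep_iso_sym:
  assumes "rep_iso F phiV phiA G psiV psiA" "dgraph_wf F"
  shows "rep_iso G psiV psiA F phiV phiA"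
proof -
  obtain aV aA where a: "bij_betw aV (verts F) (verts G)" "bij_betw aA (arcs F) (arcs G)"
    "\<forall>f\<in>arcs F. tail G (aA f) = aV (tail F f) \<and> head G (aA f) = aV (head F f)"
    "\<forall>w\<in>verts F. psiV (aV w) = phiV w" "\<forall>f\<in>arcs F. psiA (aA f) = phiA f"
    using assms(1) unfolding rep_iso_def by blast
  define bV where "bV = inv_into (verts F) aV"
  define bA where "bA = inv_into (arcs F) aA"
  have b1: "bij_betw bV (verts G) (verts F)" "bij_betw bA (arcs G) (arcs F)"
    using a bij_betw_inv_into unfolding bV_def bA_def by blast+
  have "\<forall>g\<in>arcs G. tail F (bA g) = bV (tail G g) \<and> head F (bA g) = bV (head G g)"
  proof
    fix g assume g: "g \<in> arcs G"
    then obtain f where f: "f \<in> arcs F" "g = aA f" using a(2) by (auto simp: bij_betw_def)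
    have "bA g = f" using f a(2) unfolding bA_def by (simp add: bij_betw_def)
    moreover have "tail F f \<in> verts F" "head F f \<in> verts F" using assms(2) f by (auto simp: dgraph_wf_def)
    ultimately show "tail F (bA g) = bV (tail G g) \<and> head F (bA g) = bV (head G g)"
      using a f unfolding bV_def by (auto simp: bij_betw_def)
  qed
  moreover have "\<forall>w\<in>verts G. phiV (bV w) = psiV w"
  proof
    fix w assume w: "w \<in> verts G"
    have "bV w \<in> verts F" "aV (bV w) = w" using a(1) w unfolding bV_def
      by (auto intro: bij_betw_inv_into_right inv_into_into simp: bij_betw_def)
    then show "phiV (bV w) = psiV w" using a(4) by metis
  qed
  moreover have "\<forall>g\<in>arcs G. phiA (bA g) = psiA g"
  proof
    fix w assume w: "w \<in> arcs G"
    have "bA w \<in> arcs F" "aA (bA w) = w" using a(2) w unfolding bA_def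
      by (auto intro: bij_betw_inv_into_right inv_into_into simp: bij_betw_def)
    then show "phiA (bA w) = psiA w" using a(5) by metis
  qed
  ultimately show ?thesis using b1 unfolding rep_iso_def by blast
qed

lemma rep_iso_in_arcs:
  assumes "bij_betw aV (verts F) (verts G)" "bij_betw aA (arcs F) (arcs G)"
    "\<forall>f\<in>arcs F. tail G (aA f) = aV (tail F f) \<and> head G (aA f) = aV (head F f)"
    "dgraph_wf F" "w \<in> verts F"
  shows "in_arcs G (aV w) = aA ` in_arcs F w"
proof
  show "aA ` in_arcs F w \<subseteq> in_arcs G (aV w)"
    using assms by (auto simp: in_arcs_def bij_betw_def)
next
  show "in_arcs G (aV w) \<subseteq> aA ` in_arcs F w"
  proof
    fix g assume "g \<in> in_arcs G (aV w)"
    then have g: "g \<in> arcs G" "head G g = aV w" by (auto simp: in_arcs_def)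
    then obtain f where f: "f \<in> arcs F" "g = aA f" using assms(2) by (auto simp: bij_betw_def)
    have "head F f \<in> verts F" using assms(4) f by (auto simp: dgraph_wf_def)
    then have "head F f = w" using g f assms(1,3,5) by (auto simp: bij_betw_def inj_on_def)
    then show "g \<in> aA ` in_arcs F w" using f by (auto simp: in_arcs_def)
  qed
qed



definition urel :: "('v,'e) dgraph \<Rightarrow> ('v \<times> 'v) set" where
  "urel F = {(tail F f, head F f) | f. f \<in> arcs F} \<union> {(head F f, tail F f) | f. f \<in> arcs F}"

lemma dg_connected_urel: "dg_connected F \<longleftrightarrow> (\<forall>u\<in>verts F. \<forall>v\<in>verts F. (u, v) \<in> (urel F)\<^sup>*)"
  unfolding dg_connected_def urel_def by simp

lemma urel_sym: "(u, v) \<in> (urel F)\<^sup>* \<Longrightarrow> (v, u) \<in> (urel F)\<^sup>*"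
proof -
  have "sym (urel F)" unfolding urel_def sym_def by blast
  then have "sym ((urel F)\<^sup>*)" by (rule sym_rtrancl)
  then show "(u, v) \<in> (urel F)\<^sup>* \<Longrightarrow> (v, u) \<in> (urel F)\<^sup>*" by (rule symD)
qed

lemma urel_arc1: "f \<in> arcs F \<Longrightarrow> (tail F f, head F f) \<in> urel F"
  unfolding urel_def by blast
lemma urel_arc2: "f \<in> arcs F \<Longrightarrow> (head F f, tail F f) \<in> urel F"
  unfolding urel_def by blast

lemma dg_conn_base: assumes "\<forall>v\<in>verts F. (w0, v) \<in> (urel F)\<^sup>*" shows "dg_connected F"
  unfolding dg_connected_urel
proof (intro ballI)
  fix u v assume u: "u \<in> verts F" and v: "v \<in> verts F"
  have "(w0, u) \<in> (urel F)\<^sup>*" using assms u by blast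
  then have uw: "(u, w0) \<in> (urel F)\<^sup>*" by (rule urel_sym)
  have "(w0, v) \<in> (urel F)\<^sup>*" using assms v by blast
  with uw show "(u, v) \<in> (urel F)\<^sup>*" by (rule rtrancl_trans)
qed

lemma dedges_V: "egraph_wf E \<Longrightarrow> d \<in> dedges E \<Longrightarrow> dsrc E d \<in> V0 E \<and> drng E d \<in> V0 E"
  unfolding egraph_wf_def dedges_def by auto

lemma hd_butlast: "butlast y \<noteq> [] \<Longrightarrow> hd (butlast y) = hd y"
  by (induct y) auto

lemma pok_dedges: "pok E sp c d \<Longrightarrow> c \<in> dedges E \<and> d \<in> dedges E \<and> drng E c = dsrc E d"
  by (simp add: pok_def)

lemma basis2_D: "basis_word E sp [c, d] \<Longrightarrow> c \<in> dedges E \<and> d \<in> dedges E \<and> drng E c = dsrc E d"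
  by (simp add: basis2 pok_def)

section \<open>Generic spine graphs\<close>

definition Xg :: "('a,'b) egraph \<Rightarrow> ('a \<Rightarrow> 'b) \<Rightarrow> nat set \<Rightarrow> (nat \<Rightarrow> nat) \<Rightarrow> (nat \<Rightarrow> 'b dedge) \<Rightarrow> nat \<Rightarrow> 'b dedge list set" where
  "Xg E sp I prev lab i = {y. basis_word E sp y \<and> basis_word E sp [lab i, hd y] \<and> hd y \<notin> lab ` {j \<in> I. prev j = i}}"

definition Gg :: "('a,'b) egraph \<Rightarrow> ('a \<Rightarrow> 'b) \<Rightarrow> nat set \<Rightarrow> (nat \<Rightarrow> nat) \<Rightarrow> (nat \<Rightarrow> 'b dedge) \<Rightarrow>
                  (nat \<times> 'b dedge list, nat \<times> 'b dedge list) dgraph" where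
  "Gg E sp I prev lab =
     \<lparr> verts = {(i, []) | i. i \<in> I} \<union> {(i, y) | i y. i \<in> I \<and> y \<in> Xg E sp I prev lab i},
       arcs = {(i, []) | i. i \<in> I} \<union> {(i, y) | i y. i \<in> I \<and> y \<in> Xg E sp I prev lab i},
       tail = (\<lambda>(i, y). if y = [] then (prev i, []) else (i, butlast y)),
       head = (\<lambda>p. p) \<rparr>"

definition Gg_phiV :: "('a,'b) egraph \<Rightarrow> (nat \<Rightarrow> 'b dedge) \<Rightarrow> nat \<times> 'b dedge list \<Rightarrow> 'a" where
  "Gg_phiV E lab = (\<lambda>(i, y). if y = [] then drng E (lab i) else drng E (last y))"

definition Gg_phiA :: "(nat \<Rightarrow> 'b dedge) \<Rightarrow> nat \<times> 'b dedge list \<Rightarrow> 'b dedge" where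
  "Gg_phiA lab = (\<lambda>(i, y). if y = [] then lab i else last y)"

lemma Xg_ne: "y \<in> Xg E sp I prev lab i \<Longrightarrow> y \<noteq> []"
  unfolding Xg_def using basis_ne by blast

lemma Gg_verts: "(i, y) \<in> verts (Gg E sp I prev lab) \<longleftrightarrow> i \<in> I \<and> (y = [] \<or> y \<in> Xg E sp I prev lab i)"
  unfolding Gg_def by auto

lemma Gg_arcs: "arcs (Gg E sp I prev lab) = verts (Gg E sp I prev lab)"
  unfolding Gg_def by simp

lemma Gg_head: "head (Gg E sp I prev lab) w = w"
  unfolding Gg_def by simp

lemma Gg_tail: "tail (Gg E sp I prev lab) (i, y) = (if y = [] then (prev i, []) else (i, butlast y))"
  unfolding Gg_def by simp

lemma Gg_phiV_simp: "Gg_phiV E lab (i, y) = (if y = [] then drng E (lab i) else drng E (last y))"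
  unfolding Gg_phiV_def by simp

lemma Gg_phiA_simp: "Gg_phiA lab (i, y) = (if y = [] then lab i else last y)"
  unfolding Gg_phiA_def by simp

lemma Gg_in_arcs: "w \<in> verts (Gg E sp I prev lab) \<Longrightarrow> in_arcs (Gg E sp I prev lab) w = {w}"
  unfolding in_arcs_def Gg_arcs Gg_head by auto

lemma Gg_out_arcs: "g \<in> out_arcs (Gg E sp I prev lab) (i, y) \<longleftrightarrow> g \<in> verts (Gg E sp I prev lab) \<and>
   ((snd g = [] \<and> y = [] \<and> prev (fst g) = i) \<or> (snd g \<noteq> [] \<and> fst g = i \<and> butlast (snd g) = y))"
  unfolding out_arcs_def Gg_arcs by (cases g) (auto simp: Gg_tail)

context
  fixes E :: "('a,'b) egraph" and sp I prev and lab :: "nat \<Rightarrow> 'b dedge"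
  assumes wfE: "egraph_wf E"
    and Ine: "I \<noteq> {}" and prevI: "\<forall>i\<in>I. prev i \<in> I" and previnj: "inj_on prev I"
    and labok: "\<forall>i\<in>I. basis_word E sp [lab (prev i), lab i]"
    and conn: "\<forall>i\<in>I. \<forall>j\<in>I. \<exists>n m. (prev ^^ n) i = (prev ^^ m) j"
begin

abbreviation "G \<equiv> Gg E sp I prev lab"

lemma lab_dedges: "i \<in> I \<Longrightarrow> lab i \<in> dedges E \<and> drng E (lab (prev i)) = dsrc E (lab i)"
  using labok basis2_D by blast

lemma G_wf: "dgraph_wf G"
  unfolding dgraph_wf_def Gg_arcs Gg_head
proof (intro ballI conjI)
  fix w assume w: "w \<in> verts G"
  obtain i y where wi: "w = (i, y)" by (cases w)
  show "tail G w \<in> verts G"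
  proof (cases "y = []")
    case True then show ?thesis using w wi prevI by (auto simp: Gg_verts Gg_tail)
  next
    case False
    have yX: "y \<in> Xg E sp I prev lab i" using w wi False by (simp add: Gg_verts)
    have "butlast y \<in> Xg E sp I prev lab i" if bn: "butlast y \<noteq> []"
    proof -
      have h: "hd (butlast y) = hd y" using hd_butlast[OF bn] .
      have "basis_word E sp (butlast y)" using yX basis_butlast[OF _ bn] unfolding Xg_def by blast
      then show ?thesis using yX h unfolding Xg_def by simp
    qed
    then have "butlast y = [] \<or> butlast y \<in> Xg E sp I prev lab i" by blast
    then show ?thesis using w wi False by (auto simp: Gg_verts Gg_tail)
  qed
next
  fix w assume "w \<in> verts G" then show "w \<in> verts G" .
qed

lemma G_phiA_ok: "w \<in> verts G \<Longrightarrow> Gg_phiA lab w \<in> dedges E \<and> dsrc E (Gg_phiA lab w) = Gg_phiV E lab (tail G w)"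
proof -
  assume w: "w \<in> verts G"
  obtain i y where wi: "w = (i, y)" by (cases w)
  show ?thesis
  proof (cases "y = []")
    case True then show ?thesis using w wi lab_dedges by (auto simp: Gg_verts Gg_tail Gg_phiA_simp Gg_phiV_simp)
  next
    case False
    then have yX: "y \<in> Xg E sp I prev lab i" using w wi by (simp add: Gg_verts)
    then have yb: "basis_word E sp y" and bh: "basis_word E sp [lab i, hd y]" by (auto simp: Xg_def)
    have ld: "last y \<in> dedges E" using basis_set[OF yb] False by auto
    show ?thesis
    proof (cases "butlast y = []")
      case True
      then have "y = [hd y]" using False by (cases y) (auto split: if_splits)
      then have "last y = hd y" by (metis last_ConsL)
      then show ?thesis using basis2_D[OF bh] ld wi False True by (simp add: Gg_tail Gg_phiA_simp Gg_phiV_simp)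
    next
      case bF: False
      have bl: "basis_word E sp [last (butlast y), last y]"
        using yb False bF basis_snoc[of E sp "butlast y" "last y"] by (simp add: append_butlast_last_id)
      show ?thesis using basis2_D[OF bl] ld wi False bF by (simp add: Gg_tail Gg_phiA_simp Gg_phiV_simp)
    qed
  qed
qed

lemma G_hom: "dhom E G (Gg_phiV E lab) (Gg_phiA lab)"
  unfolding dhom_def Gg_arcs Gg_head
proof (intro conjI ballI)
  fix w assume w: "w \<in> verts G"
  obtain i y where wi: "w = (i, y)" by (cases w)
  show "Gg_phiV E lab w \<in> V0 E"
  proof (cases "y = []")
    case True then show ?thesis using w wi lab_dedges dedges_V[OF wfE] by (auto simp: Gg_verts Gg_phiV_simp)
  next
    case False
    then have yb: "basis_word E sp y" using w wi by (simp add: Gg_verts Xg_def)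
    have "last y \<in> dedges E" using basis_set[OF yb] last_in_set[OF False] by blast
    then show ?thesis using wi False dedges_V[OF wfE] by (simp add: Gg_phiV_simp)
  qed
  show "Gg_phiA lab w \<in> dedges E" "dsrc E (Gg_phiA lab w) = Gg_phiV E lab (tail G w)"
    using G_phiA_ok[OF w] by auto
  show "drng E (Gg_phiA lab w) = Gg_phiV E lab w"
    using wi by (simp add: Gg_phiA_simp Gg_phiV_simp)
qed

lemma G_vertex: assumes w: "w \<in> verts G"
  shows "bij_betw (Gg_phiA lab) (out_arcs G w) (olbl E sp G (Gg_phiV E lab) (Gg_phiA lab) w)"
proof -
  obtain i y where wi: "w = (i, y)" by (cases w)
  have iI: "i \<in> I" using w wi by (simp add: Gg_verts)
  have ol: "olbl E sp G (Gg_phiV E lab) (Gg_phiA lab) w =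
     {d \<in> dedges E. dsrc E d = Gg_phiV E lab w \<and> basis_word E sp [Gg_phiA lab w, d]}"
    using olbl_single[OF Gg_in_arcs[OF w]] .
  have inj: "inj_on (Gg_phiA lab) (out_arcs G w)"
  proof (rule inj_onI)
    fix g1 g2 assume g1: "g1 \<in> out_arcs G w" and g2: "g2 \<in> out_arcs G w" and eq: "Gg_phiA lab g1 = Gg_phiA lab g2"
    obtain j1 z1 where g1e: "g1 = (j1, z1)" by (cases g1)
    obtain j2 z2 where g2e: "g2 = (j2, z2)" by (cases g2)
    have c1: "(j1, z1) \<in> verts G" "(z1 = [] \<and> y = [] \<and> prev j1 = i) \<or> (z1 \<noteq> [] \<and> j1 = i \<and> butlast z1 = y)"
      using Gg_out_arcs[of "(j1, z1)" E sp I prev lab i y] g1 g1e wi by simp_all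
    have c2: "(j2, z2) \<in> verts G" "(z2 = [] \<and> y = [] \<and> prev j2 = i) \<or> (z2 \<noteq> [] \<and> j2 = i \<and> butlast z2 = y)"
      using Gg_out_arcs[of "(j2, z2)" E sp I prev lab i y] g2 g2e wi by simp_all
    have X: False if "y = []" "prev j = i" "z \<noteq> []" "butlast z = y" "lab j = last z"
          "j \<in> I" "z \<in> Xg E sp I prev lab i" for j z
    proof -
      have "z = [last z]" using that by (metis append_butlast_last_id append_Nil)
      then have "hd z = lab j" using that by (metis list.sel(1))
      then have "hd z \<in> lab ` {j \<in> I. prev j = i}" using that by blast
      then show False using that(7) unfolding Xg_def by blast
    qed
    show "g1 = g2"
      using c1 c2 eq g1e g2e
    proof (elim disjE conjE)
      assume "z1 = []" "y = []" "prev j1 = i" "z2 = []" "prev j2 = i"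
      then show ?thesis using c1 c2 previnj g1e g2e by (auto simp: Gg_verts inj_on_def)
    next
      assume H: "z1 = []" "y = []" "prev j1 = i" "z2 \<noteq> []" "j2 = i" "butlast z2 = y"
      have "lab j1 = last z2" using eq g1e g2e H by (simp add: Gg_phiA_simp)
      moreover have "j1 \<in> I" using c1 H by (simp add: Gg_verts)
      moreover have "z2 \<in> Xg E sp I prev lab i" using c2 H by (simp add: Gg_verts)
      ultimately have False using X[of j1 z2] H by blast
      then show ?thesis ..
    next
      assume H: "z2 = []" "y = []" "prev j2 = i" "z1 \<noteq> []" "j1 = i" "butlast z1 = y"
      have "lab j2 = last z1" using eq g1e g2e H by (simp add: Gg_phiA_simp)
      moreover have "j2 \<in> I" using c2 H by (simp add: Gg_verts)
      moreover have "z1 \<in> Xg E sp I prev lab i" using c1 H by (simp add: Gg_verts)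
      ultimately have False using X[of j2 z1] H by blast
      then show ?thesis ..
    next
      assume "z1 \<noteq> []" "j1 = i" "butlast z1 = y" "z2 \<noteq> []" "j2 = i" "butlast z2 = y"
      then show ?thesis using eq g1e g2e by (simp add: Gg_phiA_simp) (metis append_butlast_last_id)
    qed
  qed
  have sub1: "Gg_phiA lab ` out_arcs G w \<subseteq> olbl E sp G (Gg_phiV E lab) (Gg_phiA lab) w"
  proof
    fix d assume "d \<in> Gg_phiA lab ` out_arcs G w"
    then obtain g where g: "g \<in> out_arcs G w" "d = Gg_phiA lab g" by blast
    obtain j z where ge: "g = (j, z)" by (cases g)
    have gv: "g \<in> verts G" and gt: "tail G g = w" using g(1) unfolding out_arcs_def Gg_arcs by auto
    have dd: "d \<in> dedges E" "dsrc E d = Gg_phiV E lab w" using G_phiA_ok[OF gv] g gt by auto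
    have c: "(z = [] \<and> y = [] \<and> prev j = i) \<or> (z \<noteq> [] \<and> j = i \<and> butlast z = y)"
      using Gg_out_arcs[of "(j, z)" E sp I prev lab i y] g(1) ge wi by simp
    have "basis_word E sp [Gg_phiA lab w, d]"
      using c
    proof (elim disjE conjE)
      assume "z = []" "y = []" "prev j = i"
      moreover have "j \<in> I" using gv ge by (simp add: Gg_verts)
      ultimately show ?thesis using labok g(2) ge wi by (auto simp: Gg_phiA_simp)
    next
      assume zc: "z \<noteq> []" "j = i" "butlast z = y"
      have zX: "z \<in> Xg E sp I prev lab i" using gv ge zc by (simp add: Gg_verts)
      show ?thesis
      proof (cases "y = []")
        case True
        then have "z = [last z]" using zc by (metis append_butlast_last_id append_Nil)
        then have hz: "hd z = last z" by (metis list.sel(1))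
        have "basis_word E sp [lab i, hd z]" using zX unfolding Xg_def by simp
        then show ?thesis using hz True wi g(2) ge zc by (simp add: Gg_phiA_simp)
      next
        case False
        have zz: "y @ [last z] = z" using zc(1,3) by (metis append_butlast_last_id)
        have "basis_word E sp (y @ [last z])" using zX zz unfolding Xg_def by simp
        then show ?thesis using False wi g(2) ge zc basis_snoc by (auto simp: Gg_phiA_simp)
      qed
    qed
    then show "d \<in> olbl E sp G (Gg_phiV E lab) (Gg_phiA lab) w" using ol dd by auto
  qed
  have sub2: "olbl E sp G (Gg_phiV E lab) (Gg_phiA lab) w \<subseteq> Gg_phiA lab ` out_arcs G w"
  proof
    fix d assume "d \<in> olbl E sp G (Gg_phiV E lab) (Gg_phiA lab) w"
    then have d: "d \<in> dedges E" "dsrc E d = Gg_phiV E lab w" "basis_word E sp [Gg_phiA lab w, d]"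
      using ol by auto
    show "d \<in> Gg_phiA lab ` out_arcs G w"
    proof (cases "y = []")
      case True
      show ?thesis
      proof (cases "d \<in> lab ` {j \<in> I. prev j = i}")
        case True
        then obtain j where j: "j \<in> I" "prev j = i" "d = lab j" by blast
        then have "(j, []) \<in> out_arcs G w" using wi \<open>y = []\<close> by (simp add: Gg_out_arcs Gg_verts)
        then show ?thesis using j by (auto simp: Gg_phiA_simp intro!: image_eqI[of _ _ "(j, [])"])
      next
        case False
        have "[d] \<in> Xg E sp I prev lab i" using False d True wi unfolding Xg_def
          by (simp add: basis1 Gg_phiA_simp)
        then have "(i, [d]) \<in> out_arcs G w" using wi True iI by (simp add: Gg_out_arcs Gg_verts)
        then show ?thesis by (auto simp: Gg_phiA_simp intro!: image_eqI[of _ _ "(i, [d])"])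
      qed
    next
      case False
      then have yX: "y \<in> Xg E sp I prev lab i" using w wi by (simp add: Gg_verts)
      then have "basis_word E sp (y @ [d])" using d False wi basis_snoc unfolding Xg_def
        by (auto simp: Gg_phiA_simp)
      then have "y @ [d] \<in> Xg E sp I prev lab i" using yX False unfolding Xg_def by auto
      then have "(i, y @ [d]) \<in> out_arcs G w" using wi iI by (simp add: Gg_out_arcs Gg_verts)
      then show ?thesis by (auto simp: Gg_phiA_simp intro!: image_eqI[of _ _ "(i, y @ [d])"])
    qed
  qed
  show ?thesis unfolding bij_betw_def using inj sub1 sub2 by blast
qed

lemma G_conn_sub: "(i, y) \<in> verts G \<Longrightarrow> ((i, []), (i, y)) \<in> (urel G)\<^sup>*"
proof (induction "length y" arbitrary: y)
  case 0 then show ?case by simp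
next
  case (Suc n)
  then have yne: "y \<noteq> []" by auto
  have tv: "tail G (i, y) \<in> verts G" using G_wf Suc.prems unfolding dgraph_wf_def Gg_arcs by blast
  then have "(i, butlast y) \<in> verts G" using yne by (simp add: Gg_tail)
  then have "((i, []), (i, butlast y)) \<in> (urel G)\<^sup>*" using Suc by auto
  moreover have "((i, butlast y), (i, y)) \<in> urel G"
    using urel_arc1[of "(i, y)" G] Suc.prems yne by (simp add: Gg_arcs Gg_tail Gg_head)
  ultimately show ?case by (rule rtrancl_into_rtrancl)
qed

lemma G_conn_prev: "i \<in> I \<Longrightarrow> (((prev ^^ n) i, []), (i, [])) \<in> (urel G)\<^sup>* \<and> (prev ^^ n) i \<in> I"
proof (induction n)
  case 0 then show ?case by simp
next
  case (Suc n)
  let ?k = "(prev ^^ n) i"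
  have kI: "?k \<in> I" using Suc by blast
  have "(?k, []) \<in> arcs G" using kI by (simp add: Gg_arcs Gg_verts)
  then have "((prev ?k, []), (?k, [])) \<in> urel G" using urel_arc1[of "(?k, [])" G] by (simp add: Gg_tail Gg_head)
  then show ?case using Suc kI prevI by (auto intro: converse_rtrancl_into_rtrancl)
qed

lemma G_ne_conn: "ne_conn_erg E sp G (Gg_phiV E lab) (Gg_phiA lab)"
proof -
  obtain i0 where i0: "i0 \<in> I" using Ine by blast
  have erg: "ext_rep_graph E sp G (Gg_phiV E lab) (Gg_phiA lab)"
    unfolding erg_iff using G_wf G_hom G_vertex Gg_in_arcs by blast
  have "\<forall>v\<in>verts G. ((i0, []), v) \<in> (urel G)\<^sup>*"
  proof
    fix v assume v: "v \<in> verts G"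
    obtain i y where vi: "v = (i, y)" by (cases v)
    have iI: "i \<in> I" using v vi by (simp add: Gg_verts)
    obtain n m where nm: "(prev ^^ n) i0 = (prev ^^ m) i" using conn i0 iI by blast
    have "(((prev ^^ n) i0, []), (i0, [])) \<in> (urel G)\<^sup>*" using G_conn_prev[OF i0] by blast
    then have a: "((i0, []), ((prev ^^ m) i, [])) \<in> (urel G)\<^sup>*" using nm urel_sym by metis
    have b: "(((prev ^^ m) i, []), (i, [])) \<in> (urel G)\<^sup>*" using G_conn_prev[OF iI] by blast
    have c: "((i, []), v) \<in> (urel G)\<^sup>*" using G_conn_sub v vi by blast
    show "((i0, []), v) \<in> (urel G)\<^sup>*" using a b c by (meson rtrancl_trans)
  qed
  then have "dg_connected G" by (rule dg_conn_base)
  moreover have "(i0, []) \<in> verts G" using i0 by (simp add: Gg_verts)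
  then have "verts G \<noteq> {}" by blast
  ultimately show ?thesis using erg by (simp add: ne_conn_erg_def)
qed

end



inductive reachG :: "('v,'e) dgraph \<Rightarrow> ('e \<Rightarrow> 'b dedge) \<Rightarrow> nat set \<Rightarrow> (nat \<Rightarrow> nat) \<Rightarrow> (nat \<Rightarrow> 'b dedge) \<Rightarrow>
   (nat \<Rightarrow> 'v) \<Rightarrow> nat \<Rightarrow> 'b dedge list \<Rightarrow> 'v \<Rightarrow> bool"
  for F phiA I prev lab S where
  rG0: "i \<in> I \<Longrightarrow> reachG F phiA I prev lab S i [] (S i)"
| rGs: "reachG F phiA I prev lab S i w a \<Longrightarrow> f \<in> arcs F \<Longrightarrow> tail F f = a \<Longrightarrow>
        (w = [] \<longrightarrow> phiA f \<notin> lab ` {j \<in> I. prev j = i}) \<Longrightarrow>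
        reachG F phiA I prev lab S i (w @ [phiA f]) (head F f)"

context
  fixes E :: "('a,'b) egraph" and sp and F :: "('v,'e) dgraph" and phiV phiA
    and I :: "nat set" and prev lab and S :: "nat \<Rightarrow> 'v"
  assumes erg: "ext_rep_graph E sp F phiV phiA"
    and conn: "dg_connected F"
    and Ine: "I \<noteq> {}" and prevI: "\<forall>i\<in>I. prev i \<in> I"
    and Sinj: "inj_on S I"
    and Sin: "\<forall>i\<in>I. S i \<in> verts F \<and> (\<exists>f. in_arcs F (S i) = {f} \<and> tail F f = S (prev i) \<and> phiA f = lab i)"
begin

abbreviation "RR \<equiv> reachG F phiA I prev lab S"

lemma R_basic: "RR i w v \<Longrightarrow> i \<in> I \<and> v \<in> verts F \<and>
   (\<exists>f. in_arcs F v = {f} \<and> phiA f = (if w = [] then lab i else last w) \<and>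
        (w = [] \<longrightarrow> v = S i \<and> tail F f = S (prev i)) \<and>
        (w \<noteq> [] \<longrightarrow> RR i (butlast w) (tail F f) \<and> (butlast w = [] \<longrightarrow> last w \<notin> lab ` {j\<in>I. prev j = i})))"
proof (induction rule: reachG.induct)
  case (rG0 i)
  then show ?case using Sin by auto
next
  case (rGs i w a f)
  have "in_arcs F (head F f) = {f}" using erg_in2[OF erg rGs.hyps(2)] .
  moreover have "head F f \<in> verts F" using erg_arc[OF erg rGs.hyps(2)] by blast
  ultimately show ?case using rGs by auto
qed

lemma R_uniq_aux: "length w + length w' = n \<Longrightarrow> RR i w v \<Longrightarrow> RR i' w' v \<Longrightarrow> i = i' \<and> w = w'"
proof (induction n arbitrary: i w i' w' v rule: less_induct)
  case (less n)
  note Ri = R_basic[OF less.prems(2)] and Ri' = R_basic[OF less.prems(3)]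
  obtain f where f: "in_arcs F v = {f}" "phiA f = (if w = [] then lab i else last w)"
    "w = [] \<longrightarrow> v = S i \<and> tail F f = S (prev i)"
    "w \<noteq> [] \<longrightarrow> RR i (butlast w) (tail F f) \<and> (butlast w = [] \<longrightarrow> last w \<notin> lab ` {j\<in>I. prev j = i})"
    using Ri by blast
  obtain f' where f': "in_arcs F v = {f'}" "phiA f' = (if w' = [] then lab i' else last w')"
    "w' = [] \<longrightarrow> v = S i' \<and> tail F f' = S (prev i')"
    "w' \<noteq> [] \<longrightarrow> RR i' (butlast w') (tail F f') \<and> (butlast w' = [] \<longrightarrow> last w' \<notin> lab ` {j\<in>I. prev j = i'})"
    using Ri' by blast
  have ff: "f' = f" using f f' by auto
  have mixed: False if A: "w1 = []" "w2 \<noteq> []" "RR j1 w1 v" "RR j2 w2 v" "length w1 + length w2 = n" for j1 j2 w1 w2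
  proof -
    obtain g where g: "in_arcs F v = {g}" "phiA g = (if w1 = [] then lab j1 else last w1)"
      "w1 = [] \<longrightarrow> v = S j1 \<and> tail F g = S (prev j1)" and j1I: "j1 \<in> I"
      using R_basic[OF A(3)] by blast
    obtain g' where g': "in_arcs F v = {g'}" "phiA g' = (if w2 = [] then lab j2 else last w2)"
      "w2 \<noteq> [] \<longrightarrow> RR j2 (butlast w2) (tail F g') \<and> (butlast w2 = [] \<longrightarrow> last w2 \<notin> lab ` {j\<in>I. prev j = j2})"
      using R_basic[OF A(4)] by blast
    have gg: "g' = g" using g g' by auto
    have r1: "RR j2 (butlast w2) (S (prev j1))" using g g' gg A by auto
    have r2: "RR (prev j1) [] (S (prev j1))" using prevI j1I by (auto intro: rG0)
    have "length [] + length (butlast w2) < n" using A by auto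
    then have "prev j1 = j2 \<and> [] = butlast w2" using less.IH r2 r1 by blast
    then have "last w2 \<notin> lab ` {j\<in>I. prev j = prev j1}" "last w2 = lab j1" using g g' gg A by auto
    then show False using j1I by blast
  qed
  show ?case
  proof (cases "w = []")
    case True
    show ?thesis
    proof (cases "w' = []")
      case True
      then show ?thesis using \<open>w = []\<close> f f' Sinj Ri Ri' by (auto simp: inj_on_def)
    next
      case False
      then show ?thesis using mixed[of w w' i i'] \<open>w = []\<close> less.prems by blast
    qed
  next
    case False
    show ?thesis
    proof (cases "w' = []")
      case True
      then show ?thesis using mixed[of w' w i' i] False less.prems by (simp add: add.commute)
    next
      case False': False
      have "RR i (butlast w) (tail F f)" "RR i' (butlast w') (tail F f)" using f f' ff False False' by auto
      moreover have "length (butlast w) + length (butlast w') < n"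
      proof -
        have "0 < length w" "0 < length w'" using False False' by auto
        then show ?thesis using less.prems(1) by (simp only: length_butlast)
      qed
      ultimately have "i = i' \<and> butlast w = butlast w'" using less.IH by blast
      moreover have "last w = last w'" using f f' ff False False' by auto
      ultimately show ?thesis using False False' by (metis append_butlast_last_id)
    qed
  qed
qed

lemma R_uniq: "RR i w v \<Longrightarrow> RR i' w' v \<Longrightarrow> i = i' \<and> w = w'"
  using R_uniq_aux by blast

lemma R_det: "RR i w v \<Longrightarrow> RR i w v' \<Longrightarrow> v = v'"
proof (induction arbitrary: v' rule: reachG.induct)
  case (rG0 i)
  then show ?case using R_basic[OF rG0.prems] by auto
next
  case (rGs i w a f)
  obtain f' where f': "in_arcs F v' = {f'}" "phiA f' = phiA f" "RR i w (tail F f')"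
    using R_basic[OF rGs.prems] by auto
  have t: "tail F f' = a" using rGs.IH f'(3) by simp
  have av: "a \<in> verts F" using R_basic[OF rGs.hyps(1)] by blast
  have "f' \<in> arcs F" using f' by (auto simp: in_arcs_def)
  then have o2: "f' \<in> out_arcs F a" using t by (simp add: out_arcs_def)
  have o1: "f \<in> out_arcs F a" using rGs.hyps(2,3) by (simp add: out_arcs_def)
  have "f = f'" using erg_det[OF erg av o1 o2 f'(2)[symmetric]] .
  then show ?case using f' by (auto simp: in_arcs_def)
qed

lemma S_phiV: "i \<in> I \<Longrightarrow> phiV (S i) = drng E (lab i)"
proof -
  assume iI: "i \<in> I"
  then obtain f where f: "in_arcs F (S i) = {f}" "phiA f = lab i" using Sin by blast
  then have "f \<in> arcs F" "head F f = S i" by (auto simp: in_arcs_def)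
  then show ?thesis using erg_arc[OF erg] f by metis
qed

lemma R_valid: "RR i w v \<Longrightarrow> (w = [] \<or> w \<in> Xg E sp I prev lab i) \<and> phiV v = Gg_phiV E lab (i, w)"
proof (induction rule: reachG.induct)
  case (rG0 i)
  then show ?case using S_phiV by (simp add: Gg_phiV_simp)
next
  case (rGs i w a f)
  obtain g where g: "in_arcs F a = {g}" "phiA g = (if w = [] then lab i else last w)"
    and iI: "i \<in> I" and av: "a \<in> verts F"
    using R_basic[OF rGs.hyps(1)] by blast
  have fo: "f \<in> out_arcs F a" using rGs.hyps by (simp add: out_arcs_def)
  have "phiA f \<in> olbl E sp F phiV phiA a" using erg_lbl[OF erg av fo] .
  then have d: "phiA f \<in> dedges E" "basis_word E sp [phiA g, phiA f]"
    using g by (auto simp: olbl_def)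
  have pv: "phiV (head F f) = drng E (phiA f)" using erg_arc[OF erg rGs.hyps(2)] by simp
  show ?case
  proof (cases "w = []")
    case True
    then have "[phiA f] \<in> Xg E sp I prev lab i" using d g rGs.hyps(4) unfolding Xg_def by (simp add: basis1)
    then show ?thesis using True pv by (simp add: Gg_phiV_simp)
  next
    case False
    then have wX: "w \<in> Xg E sp I prev lab i" using rGs.IH by blast
    then have "basis_word E sp (w @ [phiA f])" using d g False basis_snoc[of E sp w "phiA f"] unfolding Xg_def by auto
    then have "w @ [phiA f] \<in> Xg E sp I prev lab i" using wX False unfolding Xg_def by auto
    then show ?thesis using pv by (simp add: Gg_phiV_simp)
  qed
qed

lemma R_exists: assumes v: "v \<in> verts F" shows "\<exists>i w. RR i w v"
proof -
  obtain i0 where i0: "i0 \<in> I" using Ine by blast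
  have "(S i0, v) \<in> (urel F)\<^sup>*" using conn v i0 Sin unfolding dg_connected_urel by blast
  then show ?thesis
  proof (induction rule: rtrancl_induct)
    case base
    then show ?case using i0 rG0 by blast
  next
    case (step y z)
    then obtain i w where Ry: "RR i w y" by blast
    from step.hyps(2) consider (fw) f where "f \<in> arcs F" "y = tail F f" "z = head F f"
      | (bw) f where "f \<in> arcs F" "y = head F f" "z = tail F f" unfolding urel_def by blast
    then show ?case
    proof cases
      case fw
      show ?thesis
      proof (cases "w = [] \<and> phiA f \<in> lab ` {j \<in> I. prev j = i}")
        case True
        then obtain j where j: "j \<in> I" "prev j = i" "phiA f = lab j" by blast
        have yS: "y = S i" using R_basic[OF Ry] True by auto
        have iI: "i \<in> I" using R_basic[OF Ry] by blast
        obtain f0 where f0: "in_arcs F (S j) = {f0}" "tail F f0 = S (prev j)" "phiA f0 = lab j" using Sin j by blast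
        have "f0 \<in> out_arcs F (S i)" using f0 j by (auto simp: in_arcs_def out_arcs_def)
        moreover have "f \<in> out_arcs F (S i)" using fw yS by (auto simp: out_arcs_def)
        moreover have "S i \<in> verts F" using Sin iI by blast
        ultimately have "f = f0" using erg_det[OF erg] j f0 by metis
        then have "z = S j" using fw f0 by (auto simp: in_arcs_def)
        then show ?thesis using rG0[OF j(1)] by blast
      next
        case False
        then have "RR i (w @ [phiA f]) (head F f)" using rGs[OF Ry fw(1)] fw by auto
        then show ?thesis using fw by blast
      qed
    next
      case bw
      obtain g where g: "in_arcs F y = {g}"
        "w = [] \<longrightarrow> y = S i \<and> tail F g = S (prev i)"
        "w \<noteq> [] \<longrightarrow> RR i (butlast w) (tail F g)" and iI: "i \<in> I"
        using R_basic[OF Ry] by blast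
      have gf: "g = f" using g bw by (auto simp: in_arcs_def)
      show ?thesis
      proof (cases "w = []")
        case True
        then have "tail F f = S (prev i)" using g gf by simp
        moreover have "RR (prev i) [] (S (prev i))" using prevI iI by (simp add: rG0)
        ultimately show ?thesis using bw by auto
      next
        case False
        then have "RR i (butlast w) (tail F f)" using g gf by simp
        then show ?thesis using bw by auto
      qed
    qed
  qed
qed

lemma R_surj: "i \<in> I \<Longrightarrow> y \<in> Xg E sp I prev lab i \<Longrightarrow> \<exists>v. RR i y v"
proof (induction y rule: rev_induct)
  case Nil
  then show ?case using Xg_ne by blast
next
  case (snoc d w)
  have b: "basis_word E sp (w @ [d])" "basis_word E sp [lab i, hd (w @ [d])]"
    "hd (w @ [d]) \<notin> lab ` {j \<in> I. prev j = i}" using snoc.prems unfolding Xg_def by auto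
  show ?case
  proof (cases "w = []")
    case True
    obtain f where f: "in_arcs F (S i) = {f}" "phiA f = lab i" and Sv: "S i \<in> verts F" using Sin snoc.prems by blast
    have bd: "basis_word E sp [lab i, d]" using b True by simp
    then have "d \<in> olbl E sp F phiV phiA (S i)" using f S_phiV[OF snoc.prems(1)] basis2_D[OF bd]
      by (auto simp: olbl_def)
    then obtain g where g: "g \<in> out_arcs F (S i)" "phiA g = d" using erg_ex[OF erg Sv] by blast
    have "RR i ([] @ [phiA g]) (head F g)"
      by (rule rGs) (use g b True rG0[OF snoc.prems(1)] in \<open>auto simp: out_arcs_def\<close>)
    then show ?thesis using g True by auto
  next
    case False
    have bw: "basis_word E sp w" "basis_word E sp [last w, d]" using b(1) False basis_snoc by auto
    have "w \<in> Xg E sp I prev lab i" using bw b False unfolding Xg_def by auto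
    then obtain v where v: "RR i w v" using snoc.IH snoc.prems by blast
    obtain f where f: "in_arcs F v = {f}" "phiA f = last w" and vv: "v \<in> verts F"
      using R_basic[OF v] False by auto
    have "phiV v = drng E (last w)" using R_valid[OF v] False by (simp add: Gg_phiV_simp)
    then have "d \<in> olbl E sp F phiV phiA v" using f bw basis2_D[OF bw(2)] by (auto simp: olbl_def)
    then obtain g where g: "g \<in> out_arcs F v" "phiA g = d" using erg_ex[OF erg vv] by blast
    have "RR i (w @ [phiA g]) (head F g)"
      by (rule rGs) (use g v False in \<open>auto simp: out_arcs_def\<close>)
    then show ?thesis using g by auto
  qed
qed

definition cV :: "'v \<Rightarrow> nat \<times> 'b dedge list" where
  "cV v = (THE p. RR (fst p) (snd p) v)"

lemma cV_eq: "RR i w v \<Longrightarrow> cV v = (i, w)"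
  unfolding cV_def by (rule the_equality) (auto dest: R_uniq)

lemma cV_R: "v \<in> verts F \<Longrightarrow> RR (fst (cV v)) (snd (cV v)) v"
  using R_exists cV_eq by fastforce

theorem GD_iso: "rep_iso F phiV phiA (Gg E sp I prev lab) (Gg_phiV E lab) (Gg_phiA lab)"
proof -
  let ?G = "Gg E sp I prev lab"
  let ?cA = "\<lambda>f. cV (head F f)"
  have vin: "cV v \<in> verts ?G" if v: "v \<in> verts F" for v
  proof -
    obtain i w where "cV v = (i, w)" by (cases "cV v")
    then have R: "RR i w v" using cV_R[OF v] by simp
    then show ?thesis using R_valid[OF R] R_basic[OF R] cV_eq[OF R] by (simp add: Gg_verts)
  qed
  have injV: "inj_on cV (verts F)"
  proof (rule inj_onI)
    fix v v' assume "v \<in> verts F" "v' \<in> verts F" "cV v = cV v'"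
    then show "v = v'" using cV_R R_det by metis
  qed
  have bV: "bij_betw cV (verts F) (verts ?G)"
    unfolding bij_betw_def
  proof (intro conjI injV subset_antisym)
    show "cV ` verts F \<subseteq> verts ?G" using vin by blast
    show "verts ?G \<subseteq> cV ` verts F"
    proof
      fix p assume p: "p \<in> verts ?G"
      obtain i w where pe: "p = (i, w)" by (cases p)
      have iI: "i \<in> I" and wc: "w = [] \<or> w \<in> Xg E sp I prev lab i" using p pe by (auto simp: Gg_verts)
      then obtain v where Rv: "RR i w v" using R_surj rG0 by blast
      have "v \<in> verts F" using R_basic[OF Rv] by blast
      moreover have "cV v = p" using cV_eq[OF Rv] pe by simp
      ultimately show "p \<in> cV ` verts F" by blast
    qed
  qed
  have headv: "f \<in> arcs F \<Longrightarrow> head F f \<in> verts F" for f using erg_arc[OF erg] by blast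
  have bA: "bij_betw ?cA (arcs F) (arcs ?G)"
    unfolding bij_betw_def Gg_arcs
  proof (intro conjI subset_antisym)
    show "inj_on ?cA (arcs F)"
    proof (rule inj_onI)
      fix f f' assume f: "f \<in> arcs F" "f' \<in> arcs F" "cV (head F f) = cV (head F f')"
      then have "head F f = head F f'" using injV headv by (auto simp: inj_on_def)
      then show "f = f'" using erg_in2[OF erg f(1)] f(2) by (auto simp: in_arcs_def)
    qed
    show "?cA ` arcs F \<subseteq> verts ?G" using vin headv by blast
    show "verts ?G \<subseteq> ?cA ` arcs F"
    proof
      fix p assume "p \<in> verts ?G"
      then obtain v where v: "v \<in> verts F" "p = cV v" using bV by (auto simp: bij_betw_def)
      obtain f where "in_arcs F v = {f}" using R_basic[OF cV_R[OF v(1)]] by blast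
      then have "f \<in> arcs F" "head F f = v" by (auto simp: in_arcs_def)
      then show "p \<in> ?cA ` arcs F" using v by blast
    qed
  qed
  have ht: "\<forall>f\<in>arcs F. tail ?G (?cA f) = cV (tail F f) \<and> head ?G (?cA f) = cV (head F f)"
  proof
    fix f assume fa: "f \<in> arcs F"
    let ?v = "head F f"
    obtain i w where ce: "cV ?v = (i, w)" by (cases "cV ?v")
    then have R: "RR i w ?v" using cV_R[OF headv[OF fa]] by simp
    obtain g where g: "in_arcs F ?v = {g}"
        "w = [] \<longrightarrow> ?v = S i \<and> tail F g = S (prev i)"
        "w \<noteq> [] \<longrightarrow> RR i (butlast w) (tail F g)" and iI: "i \<in> I"
      using R_basic[OF R] by blast
    have gf: "g = f" using g fa by (auto simp: in_arcs_def)
    show "tail ?G (?cA f) = cV (tail F f) \<and> head ?G (?cA f) = cV (head F f)"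
    proof (cases "w = []")
      case True
      then have "cV (tail F f) = (prev i, [])" using g gf cV_eq rG0 prevI iI by metis
      then show ?thesis using ce True by (simp add: Gg_tail Gg_head)
    next
      case False
      then have "cV (tail F f) = (i, butlast w)" using g gf cV_eq by metis
      then show ?thesis using ce False by (simp add: Gg_tail Gg_head)
    qed
  qed
  have pv: "\<forall>v\<in>verts F. Gg_phiV E lab (cV v) = phiV v"
    using R_valid cV_R by (metis prod.collapse)
  have pa: "\<forall>f\<in>arcs F. Gg_phiA lab (?cA f) = phiA f"
  proof
    fix f assume fa: "f \<in> arcs F"
    obtain i w where ce: "cV (head F f) = (i, w)" by (cases "cV (head F f)")
    then have R: "RR i w (head F f)" using cV_R[OF headv[OF fa]] by simp
    obtain g where g: "in_arcs F (head F f) = {g}" "phiA g = (if w = [] then lab i else last w)"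
      using R_basic[OF R] by blast
    have "g = f" using g fa by (auto simp: in_arcs_def)
    then show "Gg_phiA lab (?cA f) = phiA f" using ce g by (simp add: Gg_phiA_simp)
  qed
  show ?thesis unfolding rep_iso_def using bV bA ht pv pa by blast
qed

end



lemma Xv_iff: "(u, w) \<in> Xv E sp v \<longleftrightarrow> u = v \<and> ((w = [] \<and> v \<in> V0 E) \<or> (basis_word E sp w \<and> dsrc E (hd w) = v))"
  unfolding Xv_def basis_paths_def using basis_ne by fastforce

lemma bp_rng_simp: "bp_rng E (u, w) = (if w = [] then u else drng E (last w))"
  by (simp add: bp_rng_def)

inductive treach :: "('v,'e) dgraph \<Rightarrow> ('e \<Rightarrow> 'b dedge) \<Rightarrow> 'v \<Rightarrow> 'b dedge list \<Rightarrow> 'v \<Rightarrow> bool"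
  for F phiA r where
  tr0: "treach F phiA r [] r"
| trs: "treach F phiA r w a \<Longrightarrow> f \<in> arcs F \<Longrightarrow> tail F f = a \<Longrightarrow> treach F phiA r (w @ [phiA f]) (head F f)"

context
  fixes E :: "('a,'b) egraph" and sp and F :: "('v,'e) dgraph" and phiV phiA and r :: 'v
  assumes erg: "ext_rep_graph E sp F phiV phiA"
    and conn: "dg_connected F"
    and rv: "r \<in> verts F" and rin: "in_arcs F r = {}"
begin

abbreviation "TT \<equiv> treach F phiA r"

lemma T_basic: "TT w v \<Longrightarrow> v \<in> verts F \<and> (w = [] \<longrightarrow> v = r) \<and>
   (w \<noteq> [] \<longrightarrow> (\<exists>f. in_arcs F v = {f} \<and> phiA f = last w \<and> TT (butlast w) (tail F f)))"
proof (induction rule: treach.induct)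
  case tr0 then show ?case using rv by simp
next
  case (trs w a f)
  have "in_arcs F (head F f) = {f}" using erg_in2[OF erg trs.hyps(2)] .
  moreover have "head F f \<in> verts F" using erg_arc[OF erg trs.hyps(2)] by blast
  ultimately show ?case using trs by auto
qed

lemma T_uniq: "TT w v \<Longrightarrow> TT w' v \<Longrightarrow> w = w'"
proof (induction arbitrary: w' rule: treach.induct)
  case tr0
  show ?case
  proof (rule ccontr)
    assume "[] \<noteq> w'"
    then obtain f where "in_arcs F r = {f}" using T_basic[OF tr0] by auto
    then show False using rin by simp
  qed
next
  case (trs w a f)
  have ia: "in_arcs F (head F f) = {f}" using erg_in2[OF erg trs.hyps(2)] .
  show ?case
  proof (cases "w' = []")
    case True
    then have "head F f = r" using T_basic[OF trs.prems] by auto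
    then show ?thesis using ia rin by simp
  next
    case False
    then obtain f' where f': "in_arcs F (head F f) = {f'}" "phiA f' = last w'" "TT (butlast w') (tail F f')"
      using T_basic[OF trs.prems] by auto
    then have "f' = f" using ia by simp
    then have "w = butlast w'" using trs.IH f' trs.hyps(3) by simp
    then show ?thesis using f' \<open>f' = f\<close> False by (metis append_butlast_last_id)
  qed
qed

lemma T_det: "TT w v \<Longrightarrow> TT w v' \<Longrightarrow> v = v'"
proof (induction arbitrary: v' rule: treach.induct)
  case tr0
  then show ?case using T_basic[OF tr0.prems] by auto
next
  case (trs w a f)
  obtain f' where f': "in_arcs F v' = {f'}" "phiA f' = phiA f" "TT w (tail F f')"
    using T_basic[OF trs.prems] by auto
  have t: "tail F f' = a" using trs.IH f'(3) by simp
  have av: "a \<in> verts F" using T_basic[OF trs.hyps(1)] by blast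
  have "f' \<in> arcs F" using f' by (auto simp: in_arcs_def)
  then have o2: "f' \<in> out_arcs F a" using t by (simp add: out_arcs_def)
  have o1: "f \<in> out_arcs F a" using trs.hyps(2,3) by (simp add: out_arcs_def)
  have "f = f'" using erg_det[OF erg av o1 o2 f'(2)[symmetric]] .
  then show ?case using f' by (auto simp: in_arcs_def)
qed

lemma T_valid: "TT w v \<Longrightarrow> (phiV r, w) \<in> Xv E sp (phiV r) \<and> bp_rng E (phiV r, w) = phiV v"
proof (induction rule: treach.induct)
  case tr0
  then show ?case using erg_V[OF erg rv] by (simp add: Xv_iff bp_rng_simp)
next
  case (trs w a f)
  have av: "a \<in> verts F" using T_basic[OF trs.hyps(1)] by blast
  have fo: "f \<in> out_arcs F a" using trs.hyps by (simp add: out_arcs_def)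
  have ol: "phiA f \<in> olbl E sp F phiV phiA a" using erg_lbl[OF erg av fo] .
  have pv: "phiV (head F f) = drng E (phiA f)" using erg_arc[OF erg trs.hyps(2)] by simp
  show ?case
  proof (cases "w = []")
    case True
    then have "a = r" using T_basic[OF trs.hyps(1)] by blast
    then have "phiA f \<in> dedges E" "dsrc E (phiA f) = phiV r" using ol rin by (auto simp: olbl_def)
    then show ?thesis using True pv by (simp add: Xv_iff bp_rng_simp basis1)
  next
    case False
    then obtain g where g: "in_arcs F a = {g}" "phiA g = last w" using T_basic[OF trs.hyps(1)] by blast
    then have b: "basis_word E sp [last w, phiA f]" using ol by (auto simp: olbl_def)
    have wX: "basis_word E sp w" "dsrc E (hd w) = phiV r" using trs.IH False by (auto simp: Xv_iff)
    have "basis_word E sp (w @ [phiA f])" using b wX False basis_snoc[of E sp w "phiA f"] by simp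
    then show ?thesis using wX False pv by (simp add: Xv_iff bp_rng_simp)
  qed
qed

lemma T_exists: assumes v: "v \<in> verts F" shows "\<exists>w. TT w v"
proof -
  have "(r, v) \<in> (urel F)\<^sup>*" using conn v rv unfolding dg_connected_urel by blast
  then show ?thesis
  proof (induction rule: rtrancl_induct)
    case base
    then show ?case using tr0[of F phiA r] by blast
  next
    case (step y z)
    then obtain w where Ry: "TT w y" by blast
    from step.hyps(2) consider (fw) f where "f \<in> arcs F" "y = tail F f" "z = head F f"
      | (bw) f where "f \<in> arcs F" "y = head F f" "z = tail F f" unfolding urel_def by blast
    then show ?case
    proof cases
      case fw
      then show ?thesis using trs[OF Ry fw(1)] by auto
    next
      case bw
      have fi: "f \<in> in_arcs F y" using bw by (simp add: in_arcs_def)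
      show ?thesis
      proof (cases "w = []")
        case True
        then have "y = r" using T_basic[OF Ry] by blast
        then show ?thesis using fi rin by simp
      next
        case False
        then obtain g where "in_arcs F y = {g}" "TT (butlast w) (tail F g)" using T_basic[OF Ry] by blast
        then show ?thesis using fi bw by auto
      qed
    qed
  qed
qed

lemma T_surj: "(phiV r, y) \<in> Xv E sp (phiV r) \<Longrightarrow> \<exists>v. TT y v"
proof (induction y rule: rev_induct)
  case Nil
  then show ?case using tr0[of F phiA r] by blast
next
  case (snoc d w)
  have b: "basis_word E sp (w @ [d])" "dsrc E (hd (w @ [d])) = phiV r" using snoc.prems by (auto simp: Xv_iff)
  show ?case
  proof (cases "w = []")
    case True
    have "d \<in> dedges E" using b True by (simp add: basis1)
    then have "d \<in> olbl E sp F phiV phiA r" using b True rin by (simp add: olbl_def)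
    then obtain g where g: "g \<in> out_arcs F r" "phiA g = d" using erg_ex[OF erg rv] by blast
    have "TT ([] @ [phiA g]) (head F g)"
      by (rule trs) (use g tr0 in \<open>auto simp: out_arcs_def\<close>)
    then show ?thesis using g True by auto
  next
    case False
    have bw: "basis_word E sp w" "basis_word E sp [last w, d]" using b(1) False basis_snoc by auto
    have "(phiV r, w) \<in> Xv E sp (phiV r)" using bw b False by (simp add: Xv_iff)
    then obtain v where v: "TT w v" using snoc.IH by blast
    obtain f where f: "in_arcs F v = {f}" "phiA f = last w" and vv: "v \<in> verts F"
      using T_basic[OF v] False by auto
    have "phiV v = drng E (last w)" using T_valid[OF v] False by (simp add: bp_rng_simp)
    then have "d \<in> olbl E sp F phiV phiA v" using f bw basis2_D[OF bw(2)] by (auto simp: olbl_def)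
    then obtain g where g: "g \<in> out_arcs F v" "phiA g = d" using erg_ex[OF erg vv] by blast
    have "TT (w @ [phiA g]) (head F g)"
      by (rule trs) (use g v in \<open>auto simp: out_arcs_def\<close>)
    then show ?thesis using g by auto
  qed
qed

definition tw :: "'v \<Rightarrow> 'b dedge list" where
  "tw v = (THE w. TT w v)"

lemma tw_eq: "TT w v \<Longrightarrow> tw v = w"
  unfolding tw_def by (rule the_equality) (auto dest: T_uniq)

lemma tw_T: "v \<in> verts F \<Longrightarrow> TT (tw v) v"
  using T_exists tw_eq by fastforce

theorem tree_iso: "rep_iso F phiV phiA (Fv E sp (phiV r)) (Fv_phiV E) Fv_phiA"
proof -
  let ?G = "Fv E sp (phiV r)"
  let ?cV = "\<lambda>v. (phiV r, tw v)"
  let ?cA = "\<lambda>f. ?cV (head F f)"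
  have vG: "verts ?G = Xv E sp (phiV r)" "arcs ?G = {x \<in> Xv E sp (phiV r). snd x \<noteq> []}"
    "\<And>x. tail ?G x = (fst x, butlast (snd x))" "\<And>x. head ?G x = x"
    by (simp_all add: Fv_def)
  have vin: "?cV v \<in> Xv E sp (phiV r)" if v: "v \<in> verts F" for v
    using T_valid[OF tw_T[OF v]] by blast
  have injV: "inj_on ?cV (verts F)"
  proof (rule inj_onI)
    fix v v' assume "v \<in> verts F" "v' \<in> verts F" "?cV v = ?cV v'"
    then show "v = v'" using tw_T T_det by (metis prod.inject)
  qed
  have bV: "bij_betw ?cV (verts F) (verts ?G)"
    unfolding bij_betw_def vG
  proof (intro conjI injV subset_antisym)
    show "?cV ` verts F \<subseteq> Xv E sp (phiV r)" using vin by blast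
    show "Xv E sp (phiV r) \<subseteq> ?cV ` verts F"
    proof
      fix p assume p: "p \<in> Xv E sp (phiV r)"
      obtain u w where pe: "p = (u, w)" by (cases p)
      have u: "u = phiV r" using p pe by (simp add: Xv_iff)
      then obtain v where Rv: "TT w v" using T_surj p pe by blast
      have "v \<in> verts F" using T_basic[OF Rv] by blast
      moreover have "?cV v = p" using tw_eq[OF Rv] pe u by simp
      ultimately show "p \<in> ?cV ` verts F" by blast
    qed
  qed
  have headv: "f \<in> arcs F \<Longrightarrow> head F f \<in> verts F" for f using erg_arc[OF erg] by blast
  have twne: "tw (head F f) \<noteq> []" if f: "f \<in> arcs F" for f
  proof
    assume "tw (head F f) = []"
    then have "head F f = r" using T_basic[OF tw_T[OF headv[OF f]]] by simp
    then show False using rin f by (auto simp: in_arcs_def)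
  qed
  have bA: "bij_betw ?cA (arcs F) (arcs ?G)"
    unfolding bij_betw_def vG
  proof (intro conjI subset_antisym)
    show "inj_on ?cA (arcs F)"
    proof (rule inj_onI)
      fix f f' assume f: "f \<in> arcs F" "f' \<in> arcs F" "?cA f = ?cA f'"
      then have "head F f = head F f'" using injV headv by (auto simp: inj_on_def)
      then show "f = f'" using erg_in2[OF erg f(1)] f(2) by (auto simp: in_arcs_def)
    qed
    show "?cA ` arcs F \<subseteq> {x \<in> Xv E sp (phiV r). snd x \<noteq> []}" using vin headv twne by auto
    show "{x \<in> Xv E sp (phiV r). snd x \<noteq> []} \<subseteq> ?cA ` arcs F"
    proof
      fix p assume p: "p \<in> {x \<in> Xv E sp (phiV r). snd x \<noteq> []}"
      have "p \<in> ?cV ` verts F" using p bV vG unfolding bij_betw_def by auto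
      then obtain v where v: "v \<in> verts F" "p = ?cV v" by blast
      then have "tw v \<noteq> []" using p by auto
      then obtain f where "in_arcs F v = {f}" using T_basic[OF tw_T[OF v(1)]] by blast
      then have "f \<in> arcs F" "head F f = v" by (auto simp: in_arcs_def)
      then show "p \<in> ?cA ` arcs F" using v by blast
    qed
  qed
  have ht: "\<forall>f\<in>arcs F. tail ?G (?cA f) = ?cV (tail F f) \<and> head ?G (?cA f) = ?cV (head F f)"
  proof
    fix f assume fa: "f \<in> arcs F"
    let ?v = "head F f"
    have R: "TT (tw ?v) ?v" using tw_T[OF headv[OF fa]] .
    obtain g where g: "in_arcs F ?v = {g}" "TT (butlast (tw ?v)) (tail F g)"
      using T_basic[OF R] twne[OF fa] by blast
    have gf: "g = f" using g fa by (auto simp: in_arcs_def)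
    have "tw (tail F f) = butlast (tw ?v)" using tw_eq g gf by metis
    then show "tail ?G (?cA f) = ?cV (tail F f) \<and> head ?G (?cA f) = ?cV (head F f)"
      using vG by simp
  qed
  have pv: "\<forall>v\<in>verts F. Fv_phiV E (?cV v) = phiV v"
    using T_valid tw_T by (simp add: Fv_phiV_def)
  have pa: "\<forall>f\<in>arcs F. Fv_phiA (?cA f) = phiA f"
  proof
    fix f assume fa: "f \<in> arcs F"
    have R: "TT (tw (head F f)) (head F f)" using tw_T[OF headv[OF fa]] .
    obtain g where g: "in_arcs F (head F f) = {g}" "phiA g = last (tw (head F f))"
      using T_basic[OF R] twne[OF fa] by blast
    have "g = f" using g fa by (auto simp: in_arcs_def)
    then show "Fv_phiA (?cA f) = phiA f" using g by (simp add: Fv_phiA_def)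
  qed
  show ?thesis unfolding rep_iso_def using bV bA ht pv pa by blast
qed

end

context
  fixes E :: "('a,'b) egraph" and sp :: "'a \<Rightarrow> 'b" and v :: 'a
  assumes wfE: "egraph_wf E" and vV: "v \<in> V0 E"
begin

abbreviation "FV \<equiv> Fv E sp v"

lemma FV_simps: "verts FV = Xv E sp v" "arcs FV = {x \<in> Xv E sp v. snd x \<noteq> []}"
    "tail FV x = (fst x, butlast (snd x))" "head FV x = x"
  by (simp_all add: Fv_def)

lemma FV_tail_in: "x \<in> Xv E sp v \<Longrightarrow> snd x \<noteq> [] \<Longrightarrow> (fst x, butlast (snd x)) \<in> Xv E sp v"
proof -
  assume x: "x \<in> Xv E sp v" and ne: "snd x \<noteq> []"
  obtain u w where xe: "x = (u, w)" by (cases x)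
  have u: "u = v" and b: "basis_word E sp w" "dsrc E (hd w) = v" using x xe ne by (auto simp: Xv_iff)
  show ?thesis
  proof (cases "butlast w = []")
    case True then show ?thesis using xe u vV by (simp add: Xv_iff)
  next
    case False
    then show ?thesis using xe u b basis_butlast[OF b(1) False] hd_butlast[OF False] by (simp add: Xv_iff)
  qed
qed

lemma FV_in_arcs: "(u, w) \<in> Xv E sp v \<Longrightarrow> in_arcs FV (u, w) = (if w = [] then {} else {(u, w)})"
  unfolding in_arcs_def FV_simps by auto

lemma FV_out_arcs: "g \<in> out_arcs FV (u, w) \<longleftrightarrow> g \<in> Xv E sp v \<and> snd g \<noteq> [] \<and> fst g = u \<and> butlast (snd g) = w"
  unfolding out_arcs_def FV_simps by auto

lemma FV_ne_conn: "ne_conn_erg E sp FV (Fv_phiV E) Fv_phiA"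
proof -
  have wf: "dgraph_wf FV" unfolding dgraph_wf_def FV_simps using FV_tail_in by auto
  have pvV: "Fv_phiV E x \<in> V0 E" if x: "x \<in> Xv E sp v" for x
  proof -
    obtain u w where xe: "x = (u, w)" by (cases x)
    show ?thesis
    proof (cases "w = []")
      case True then show ?thesis using x xe vV by (simp add: Fv_phiV_def bp_rng_simp Xv_iff)
    next
      case False
      then have "basis_word E sp w" using x xe by (simp add: Xv_iff)
      then have "last w \<in> dedges E" using basis_set last_in_set[OF False] by blast
      then show ?thesis using xe False dedges_V[OF wfE] by (simp add: Fv_phiV_def bp_rng_simp)
    qed
  qed
  have arcok: "Fv_phiA x \<in> dedges E \<and> dsrc E (Fv_phiA x) = Fv_phiV E (fst x, butlast (snd x)) \<and>
               drng E (Fv_phiA x) = Fv_phiV E x" if x: "x \<in> Xv E sp v" "snd x \<noteq> []" for x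
  proof -
    obtain u w where xe: "x = (u, w)" by (cases x)
    have ne: "w \<noteq> []" using x xe by simp
    have b: "basis_word E sp w" "dsrc E (hd w) = v" "u = v" using x xe ne by (auto simp: Xv_iff)
    have ld: "last w \<in> dedges E" using basis_set[OF b(1)] last_in_set[OF ne] by blast
    have "dsrc E (last w) = bp_rng E (u, butlast w)"
    proof (cases "butlast w = []")
      case True
      then have "w = [hd w]" using ne by (cases w) (auto split: if_splits)
      then have "last w = hd w" by (metis last_ConsL)
      then show ?thesis using True b by (simp add: bp_rng_simp)
    next
      case False
      have bl: "basis_word E sp [last (butlast w), last w]"
        using b ne False basis_snoc[of E sp "butlast w" "last w"] by (simp add: append_butlast_last_id)
      show ?thesis using basis2_D[OF bl] False by (simp add: bp_rng_simp)
    qed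
    then show ?thesis using ld xe ne by (simp add: Fv_phiA_def Fv_phiV_def bp_rng_simp)
  qed
  have hom: "dhom E FV (Fv_phiV E) Fv_phiA"
    unfolding dhom_def FV_simps using pvV arcok by auto
  have vtx: "(in_arcs FV x = {} \<or> (\<exists>f. in_arcs FV x = {f})) \<and>
      bij_betw Fv_phiA (out_arcs FV x) (olbl E sp FV (Fv_phiV E) Fv_phiA x)" if x: "x \<in> verts FV" for x
  proof -
    obtain u w where xe: "x = (u, w)" by (cases x)
    have xX: "(u, w) \<in> Xv E sp v" using x xe FV_simps by simp
    have u: "u = v" using xX by (simp add: Xv_iff)
    have ia: "in_arcs FV (u, w) = (if w = [] then {} else {(u, w)})" using FV_in_arcs[OF xX] .
    have ol: "olbl E sp FV (Fv_phiV E) Fv_phiA (u, w) =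
       {d \<in> dedges E. dsrc E d = bp_rng E (u, w) \<and> (w \<noteq> [] \<longrightarrow> basis_word E sp [last w, d])}"
      using ia by (auto simp: olbl_def Fv_phiV_def Fv_phiA_def)
    have inj: "inj_on Fv_phiA (out_arcs FV (u, w))"
    proof (rule inj_onI)
      fix g1 g2 assume "g1 \<in> out_arcs FV (u, w)" "g2 \<in> out_arcs FV (u, w)" "Fv_phiA g1 = Fv_phiA g2"
      then show "g1 = g2" unfolding FV_out_arcs Fv_phiA_def
        by (metis append_butlast_last_id prod.expand)
    qed
    have s1: "Fv_phiA ` out_arcs FV (u, w) \<subseteq> olbl E sp FV (Fv_phiV E) Fv_phiA (u, w)"
    proof
      fix d assume "d \<in> Fv_phiA ` out_arcs FV (u, w)"
      then obtain g where g: "g \<in> out_arcs FV (u, w)" "d = Fv_phiA g" by blast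
      obtain u' z where ge: "g = (u', z)" by (cases g)
      have gc: "(u', z) \<in> Xv E sp v" "z \<noteq> []" "u' = u" "butlast z = w" using g ge FV_out_arcs by auto
      have zz: "z = w @ [d]" using gc g ge by (simp add: Fv_phiA_def) (metis append_butlast_last_id)
      have bz: "basis_word E sp z" "dsrc E (hd z) = v" using gc by (auto simp: Xv_iff)
      have dd: "d \<in> dedges E" using basis_set[OF bz(1)] zz by auto
      show "d \<in> olbl E sp FV (Fv_phiV E) Fv_phiA (u, w)"
      proof (cases "w = []")
        case True
        then show ?thesis using ol dd bz zz u by (simp add: bp_rng_simp)
      next
        case False
        then have bl: "basis_word E sp [last w, d]" using bz zz basis_snoc by auto
        then show ?thesis using ol dd basis2_D[OF bl] False by (auto simp: bp_rng_simp)
      qed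
    qed
    have s2: "olbl E sp FV (Fv_phiV E) Fv_phiA (u, w) \<subseteq> Fv_phiA ` out_arcs FV (u, w)"
    proof
      fix d assume "d \<in> olbl E sp FV (Fv_phiV E) Fv_phiA (u, w)"
      then have d: "d \<in> dedges E" "dsrc E d = bp_rng E (u, w)" "w \<noteq> [] \<longrightarrow> basis_word E sp [last w, d]"
        using ol by auto
      have "(u, w @ [d]) \<in> Xv E sp v"
      proof (cases "w = []")
        case True then show ?thesis using d u by (simp add: Xv_iff bp_rng_simp basis1)
      next
        case False
        then have "basis_word E sp w" "dsrc E (hd w) = v" using xX by (auto simp: Xv_iff)
        then show ?thesis using d u False basis_snoc[of E sp w d] by (simp add: Xv_iff)
      qed
      then have "(u, w @ [d]) \<in> out_arcs FV (u, w)" by (simp add: FV_out_arcs)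
      then show "d \<in> Fv_phiA ` out_arcs FV (u, w)" by (force simp: Fv_phiA_def)
    qed
    have "bij_betw Fv_phiA (out_arcs FV (u, w)) (olbl E sp FV (Fv_phiV E) Fv_phiA (u, w))"
      unfolding bij_betw_def using inj s1 s2 by blast
    then show ?thesis using ia xe by auto
  qed
  have erg: "ext_rep_graph E sp FV (Fv_phiV E) Fv_phiA"
    unfolding erg_iff using wf hom vtx by blast
  have r: "(v, []) \<in> verts FV" using vV by (simp add: FV_simps Xv_iff)
  have cn: "((v, []), (v, w)) \<in> (urel FV)\<^sup>*" if "(v, w) \<in> verts FV" for w
    using that
  proof (induction "length w" arbitrary: w)
    case 0 then show ?case by simp
  next
    case (Suc n)
    then have ne: "w \<noteq> []" by auto
    have "(v, w) \<in> Xv E sp v" using Suc.prems FV_simps by simp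
    then have tv: "(v, butlast w) \<in> verts FV" using FV_tail_in[of "(v, w)"] ne FV_simps by simp
    then have "((v, []), (v, butlast w)) \<in> (urel FV)\<^sup>*" using Suc by auto
    moreover have "((v, butlast w), (v, w)) \<in> urel FV"
      using urel_arc1[of "(v, w)" FV] Suc.prems ne by (simp add: FV_simps)
    ultimately show ?case by (rule rtrancl_into_rtrancl)
  qed
  have "\<forall>x\<in>verts FV. ((v, []), x) \<in> (urel FV)\<^sup>*"
  proof
    fix x assume x: "x \<in> verts FV"
    obtain u w where xe: "x = (u, w)" by (cases x)
    then have "u = v" using x by (simp add: FV_simps Xv_iff)
    then show "((v, []), x) \<in> (urel FV)\<^sup>*" using cn x xe by simp
  qed
  then have "dg_connected FV" by (rule dg_conn_base)
  then show ?thesis using erg r unfolding ne_conn_erg_def by blast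
qed

end



section \<open>Modular arithmetic for cyclic predecessor\<close>

lemma M1: fixes m :: nat assumes "0 < m" "i < m" shows "(i + m - 1) mod m = (if i = 0 then m - 1 else i - 1)"
proof (cases "i = 0")
  case True
  have "m - 1 < m" using assms by simp
  then show ?thesis using True by simp
next
  case False
  have e: "i + m - 1 = (i - 1) + m" using assms False by arith
  have "(i + m - 1) mod m = (i - 1) mod m" unfolding e by simp
  moreover have "i - 1 < m" using assms by arith
  ultimately show ?thesis using False by simp
qed

lemma M2: "0 < (m::nat) \<Longrightarrow> i < m \<Longrightarrow> k \<le> i \<Longrightarrow> ((\<lambda>i. (i + m - 1) mod m) ^^ k) i = i - k"
proof (induction k)
  case 0 then show ?case by simp
next
  case (Suc k)
  then have "((\<lambda>i. (i + m - 1) mod m) ^^ k) i = i - k" by simp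
  then show ?case using Suc.prems M1[of m "i - k"] by simp
qed

lemma M3: "0 < (m::nat) \<Longrightarrow> t < m \<Longrightarrow> ((\<lambda>i. (i + m - 1) mod m) ^^ m) t = t"
proof -
  assume m: "0 < m" and t: "t < m"
  let ?P = "\<lambda>i. (i + m - 1) mod m"
  have e: "m = (m - t - 1) + (Suc 0 + t)" using t by simp
  have "(?P ^^ (Suc 0 + t)) t = ?P ((?P ^^ t) t)" by simp
  also have "\<dots> = ?P 0" using M2[OF m t, of t] by simp
  also have "\<dots> = m - 1" using M1[OF m m] by simp
  finally have a: "(?P ^^ (Suc 0 + t)) t = m - 1" .
  have "(?P ^^ m) t = (?P ^^ (m - t - 1)) ((?P ^^ (Suc 0 + t)) t)"
    by (subst e) (simp only: funpow_add comp_def)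
  also have "\<dots> = (m - 1) - (m - t - 1)" using a M2[OF m, of "m - 1" "m - t - 1"] m t by simp
  also have "\<dots> = t" using t by simp
  finally show ?thesis .
qed

lemma M4: fixes m :: nat assumes "0 < m" "s < m" "r = (s + m - 1) mod m" shows "s = (r + 1) mod m"
proof (cases "s = 0")
  case True
  then have "r + 1 = m" using assms M1[OF assms(1,2)] by simp
  then show ?thesis using True by simp
next
  case False
  then have "r + 1 = s" using assms M1[OF assms(1,2)] by simp
  then show ?thesis using assms by simp
qed

lemma M5: fixes m :: nat assumes "0 < m" shows "(a + m - 1) mod m = (a + (m - 1)) mod m"
proof -
  have "a + m - 1 = a + (m - 1)" using assms by arith
  then show ?thesis by simp
qed

lemma ex_add: "\<exists>n m. n + (i::nat) = m + j"
  by (rule exI[of _ j], rule exI[of _ i]) simp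

lemma Xi_inf_Xg: "Xi_inf E sp x i = Xg E sp UNIV Suc x i"
proof -
  have "x ` {j \<in> UNIV. Suc j = i} = (if i = 0 then {} else {x (i - 1)})"
    by (cases i) auto
  then show ?thesis unfolding Xi_inf_def Xg_def by auto
qed

lemma Finf_Gg: "Finf E sp x = Gg E sp UNIV Suc x"
  unfolding Finf_def Gg_def Xi_inf_Xg by simp

lemma Finf_phiV_Gg: "Finf_phiV E x = Gg_phiV E x"
  unfolding Finf_phiV_def Gg_phiV_def ..

lemma Finf_phiA_Gg: "Finf_phiA x = Gg_phiA x"
  unfolding Finf_phiA_def Gg_phiA_def ..

lemma Xi_c_Xg: assumes "0 < length y" "i < length y"
  shows "Xi_c E sp y i = Xg E sp {..<length y} (\<lambda>i. (i + length y - 1) mod length y) ((!) y) i"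
proof -
  let ?m = "length y"
  have "{j \<in> {..<?m}. (j + ?m - 1) mod ?m = i} = {Suc i mod ?m}"
  proof (intro set_eqI iffI)
    fix j assume "j \<in> {j \<in> {..<?m}. (j + ?m - 1) mod ?m = i}"
    then have j: "j < ?m" "(j + ?m - 1) mod ?m = i" by auto
    then have "j = (i + 1) mod ?m" using M4[OF assms(1) j(1)] by simp
    then show "j \<in> {Suc i mod ?m}" by simp
  next
    fix j assume "j \<in> {Suc i mod ?m}"
    then have j: "j = Suc i mod ?m" by simp
    show "j \<in> {j \<in> {..<?m}. (j + ?m - 1) mod ?m = i}"
    proof (cases "Suc i = ?m")
      case True
      then have "j = 0" using j by simp
      then show ?thesis using assms True by simp
    next
      case False
      then have "j = Suc i" using j assms by simp
      then show ?thesis using assms False M1[OF assms(1), of j] by simp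
    qed
  qed
  then show ?thesis unfolding Xi_c_def Xg_def by auto
qed

lemma Fc_Gg: assumes "y \<noteq> []"
  shows "Fc E sp y = Gg E sp {..<length y} (\<lambda>i. (i + length y - 1) mod length y) ((!) y)"
proof -
  have "0 < length y" using assms by simp
  then have "{(i, z) |i z. i < length y \<and> z \<in> Xi_c E sp y i} =
     {(i, z) |i z. i \<in> {..<length y} \<and> z \<in> Xg E sp {..<length y} (\<lambda>i. (i + length y - 1) mod length y) ((!) y) i}"
    using Xi_c_Xg by fastforce
  then show ?thesis unfolding Fc_def Gg_def by simp
qed

lemma Fc_phiV_Gg: "Fc_phiV E y = Gg_phiV E ((!) y)"
  unfolding Fc_phiV_def Gg_phiV_def ..

lemma Fc_phiA_Gg: "Fc_phiA y = Gg_phiA ((!) y)"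
  unfolding Fc_phiA_def Gg_phiA_def ..

lemma Xinf_iff: "x \<in> Xinf E sp \<longleftrightarrow> (\<forall>k. basis_word E sp [x (Suc k), x k])"
proof
  assume H: "x \<in> Xinf E sp"
  show "\<forall>k. basis_word E sp [x (Suc k), x k]"
  proof
    fix k
    have "\<forall>n\<ge>1. basis_word E sp (map x (rev [0..<n]))" using H unfolding Xinf_def by simp
    then have "basis_word E sp (map x (rev [0..<Suc (Suc k)]))" by (erule_tac x="Suc (Suc k)" in allE) simp
    then have "basis_word E sp (x (Suc k) # x k # map x (rev [0..<k]))" by simp
    then show "basis_word E sp [x (Suc k), x k]" using basis_Cons[of E sp "x (Suc k)" "x k # map x (rev [0..<k])"] by simp
  qed
next
  assume H: "\<forall>k. basis_word E sp [x (Suc k), x k]"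
  have B: "basis_word E sp (map x (rev [0..<Suc n]))" for n
  proof (induction n)
    case 0
    have "x 0 \<in> dedges E" using basis2_D[OF H[rule_format, of 0]] by blast
    then show ?case by (simp add: basis1)
  next
    case (Suc n)
    have eq: "map x (rev [0..<Suc (Suc n)]) = x (Suc n) # map x (rev [0..<Suc n])" by simp
    have hd: "hd (map x (rev [0..<Suc n])) = x n" by simp
    have ne: "map x (rev [0..<Suc n]) \<noteq> []" by simp
    have hb: "basis_word E sp [x (Suc n), x n]" using H by blast
    show ?case unfolding eq using basis_Cons[of E sp "x (Suc n)" "map x (rev [0..<Suc n])"] Suc.IH hb hd ne
      by simp
  qed
  show "x \<in> Xinf E sp" unfolding Xinf_def
  proof (intro CollectI allI impI)
    fix n :: nat assume "1 \<le> n"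
    then obtain k where "n = Suc k" by (cases n) auto
    then show "basis_word E sp (map x (rev [0..<n]))" using B by simp
  qed
qed

lemma funpow_Suc_plus: "(Suc ^^ n) i = n + i"
  by (induction n) auto

lemma Finf_ne_conn: "egraph_wf E \<Longrightarrow> x \<in> Xinf E sp \<Longrightarrow> ne_conn_erg E sp (Finf E sp x) (Finf_phiV E x) (Finf_phiA x)"
  unfolding Finf_Gg Finf_phiV_Gg Finf_phiA_Gg
  by (rule G_ne_conn) (auto simp: Xinf_iff funpow_Suc_plus intro: ex_add)

lemma Finf_ne_conn': "egraph_wf E \<Longrightarrow> x \<in> Xinf E sp \<Longrightarrow> ne_conn_erg E sp (Gg E sp UNIV Suc x) (Gg_phiV E x) (Gg_phiA x)"
  using Finf_ne_conn Finf_Gg Finf_phiV_Gg Finf_phiA_Gg by metis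

fun isG :: "'b dedge \<Rightarrow> bool" where "isG (Ghost e) = True" | "isG (Real e) = False"
fun unD :: "'b dedge \<Rightarrow> 'b" where "unD (Ghost e) = e" | "unD (Real e) = e"

lemma Xc_props: assumes "y \<in> Xc E"
  shows "y \<noteq> []" "set y \<subseteq> dedges E" "\<And>i. Suc i < length y \<Longrightarrow> drng E (y ! i) = dsrc E (y ! Suc i)"
    "dsrc E (y ! 0) = drng E (y ! (length y - 1))" "(\<forall>c\<in>set y. isG c) \<or> (\<forall>c\<in>set y. \<not> isG c)"
proof -
  show ne: "y \<noteq> []" "set y \<subseteq> dedges E" using assms by (auto simp: Xc_def dpath_def)
  show "\<And>i. Suc i < length y \<Longrightarrow> drng E (y ! i) = dsrc E (y ! Suc i)"
    using assms successively_nth by (auto simp: Xc_def dpath_def)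
  show "dsrc E (y ! 0) = drng E (y ! (length y - 1))" using assms ne by (auto simp: Xc_def hd_conv_nth last_conv_nth)
  show "(\<forall>c\<in>set y. isG c) \<or> (\<forall>c\<in>set y. \<not> isG c)" using assms by (auto simp: Xc_def)
qed

lemma Fc_ne_conn': assumes wfE: "egraph_wf E" and y: "y \<in> Xc E"
  shows "ne_conn_erg E sp (Gg E sp {..<length y} (\<lambda>i. (i + length y - 1) mod length y) ((!) y))
           (Gg_phiV E ((!) y)) (Gg_phiA ((!) y))"
proof -
  note P = Xc_props[OF y]
  let ?m = "length y"
  let ?P = "\<lambda>i. (i + ?m - 1) mod ?m"
  have m: "0 < ?m" using P by simp
  show ?thesis
  proof (rule G_ne_conn[OF wfE])
    show "{..<?m} \<noteq> {}" using m by auto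
    show "\<forall>i\<in>{..<?m}. ?P i \<in> {..<?m}" using m by auto
    show "inj_on ?P {..<?m}"
      by (rule inj_onI) (use M1[OF m] in \<open>auto split: if_splits\<close>)
    show "\<forall>i\<in>{..<?m}. basis_word E sp [y ! ?P i, y ! i]"
    proof
      fix i assume "i \<in> {..<?m}"
      then have i: "i < ?m" by simp
      have c: "y ! ?P i \<in> dedges E" "y ! i \<in> dedges E" using P(2) i m by auto
      have d: "drng E (y ! ?P i) = dsrc E (y ! i)"
      proof (cases "i = 0")
        case True then show ?thesis using P(4) M1[OF m i] by simp
      next
        case False then show ?thesis using P(3)[of "i - 1"] M1[OF m i] i by simp
      qed
      have "isG (y ! ?P i) = isG (y ! i)" using P(5) c i m by (metis mod_less_divisor nth_mem)
      then show "basis_word E sp [y ! ?P i, y ! i]" using c d unfolding basis2 pok_def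
        by (cases "y ! ?P i"; cases "y ! i") auto
    qed
    show "\<forall>i\<in>{..<?m}. \<forall>j\<in>{..<?m}. \<exists>n n'. (?P ^^ n) i = (?P ^^ n') j"
    proof (intro ballI)
      fix i j assume "i \<in> {..<?m}" "j \<in> {..<?m}"
      then have "(?P ^^ i) i = 0" "(?P ^^ j) j = 0" using M2[OF m] by auto
      then show "\<exists>n n'. (?P ^^ n) i = (?P ^^ n') j" by metis
    qed
  qed
qed

lemma Fc_ne_conn: "egraph_wf E \<Longrightarrow> y \<in> Xc E \<Longrightarrow> ne_conn_erg E sp (Fc E sp y) (Fc_phiV E y) (Fc_phiA y)"
  using Fc_ne_conn' Fc_Gg Fc_phiV_Gg Fc_phiA_Gg Xc_props(1) by metis



section \<open>Uniqueness and distinctness\<close>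

lemma Fv_inj: assumes wfE: "egraph_wf E" and v: "v \<in> V0 E" and v': "v' \<in> V0 E"
  and iso: "rep_iso (Fv E sp v) (Fv_phiV E) Fv_phiA (Fv E sp v') (Fv_phiV E) Fv_phiA"
  shows "v = v'"
proof -
  obtain aV aA where a: "bij_betw aV (verts (Fv E sp v)) (verts (Fv E sp v'))" "bij_betw aA (arcs (Fv E sp v)) (arcs (Fv E sp v'))"
    "\<forall>f\<in>arcs (Fv E sp v). tail (Fv E sp v') (aA f) = aV (tail (Fv E sp v) f) \<and> head (Fv E sp v') (aA f) = aV (head (Fv E sp v) f)"
    "\<forall>w\<in>verts (Fv E sp v). Fv_phiV E (aV w) = Fv_phiV E w"
    using iso unfolding rep_iso_def by blast
  have wf: "dgraph_wf (Fv E sp v)" using FV_ne_conn[OF wfE v] erg_wf unfolding ne_conn_erg_def by blast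
  have r: "(v, []) \<in> verts (Fv E sp v)" using v by (simp add: Fv_def Xv_iff)
  have "in_arcs (Fv E sp v) (v, []) = {}" using FV_in_arcs[OF wfE v] r by (simp add: Fv_def)
  then have e: "in_arcs (Fv E sp v') (aV (v, [])) = {}" using rep_iso_in_arcs[OF a(1,2,3) wf r] by simp
  have av: "aV (v, []) \<in> Xv E sp v'" using a(1) r by (auto simp: bij_betw_def Fv_def)
  obtain u w where ue: "aV (v, []) = (u, w)" by (cases "aV (v, [])")
  have "w = []" using e FV_in_arcs[OF wfE v' av[unfolded ue]] ue by (auto split: if_splits)
  moreover have "u = v'" using av ue by (simp add: Xv_iff)
  moreover have "Fv_phiV E (aV (v, [])) = v" using a(4) r by (simp add: Fv_phiV_def bp_rng_simp)
  ultimately show ?thesis using ue by (simp add: Fv_phiV_def bp_rng_simp)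
qed

lemma Fv_not_Gg: assumes wfE: "egraph_wf E" and v: "v \<in> V0 E"
  shows "\<not> rep_iso (Fv E sp v) (Fv_phiV E) Fv_phiA (Gg E sp I prev lab) (Gg_phiV E lab) (Gg_phiA lab)"
proof
  assume iso: "rep_iso (Fv E sp v) (Fv_phiV E) Fv_phiA (Gg E sp I prev lab) (Gg_phiV E lab) (Gg_phiA lab)"
  obtain aV aA where a: "bij_betw aV (verts (Fv E sp v)) (verts (Gg E sp I prev lab))" "bij_betw aA (arcs (Fv E sp v)) (arcs (Gg E sp I prev lab))"
    "\<forall>f\<in>arcs (Fv E sp v). tail (Gg E sp I prev lab) (aA f) = aV (tail (Fv E sp v) f) \<and> head (Gg E sp I prev lab) (aA f) = aV (head (Fv E sp v) f)"
    using iso unfolding rep_iso_def by blast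
  have wf: "dgraph_wf (Fv E sp v)" using FV_ne_conn[OF wfE v] erg_wf unfolding ne_conn_erg_def by blast
  have r: "(v, []) \<in> verts (Fv E sp v)" using v by (simp add: Fv_def Xv_iff)
  have "in_arcs (Fv E sp v) (v, []) = {}" using FV_in_arcs[OF wfE v] r by (simp add: Fv_def)
  then have e: "in_arcs (Gg E sp I prev lab) (aV (v, [])) = {}" using rep_iso_in_arcs[OF a(1,2,3) wf r] by simp
  have av: "aV (v, []) \<in> verts (Gg E sp I prev lab)" using a(1) r by (auto simp: bij_betw_def)
  show False using Gg_in_arcs[OF av] e by simp
qed

lemma Gg_tail_len: "length (snd (tail (Gg E sp I prev lab) w)) = length (snd w) - 1"
  by (cases w) (simp add: Gg_tail)

lemma Gg_tail_fst: "snd w \<noteq> [] \<Longrightarrow> fst (tail (Gg E sp I prev lab) w) = fst w"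
  by (cases w) (simp add: Gg_tail)

lemma Gg_tail_nil: "tail (Gg E sp I prev lab) (i, []) = (prev i, [])"
  by (simp add: Gg_tail)

lemma walk_len: assumes "\<forall>k. T (Suc k) = tail (Gg E sp I prev lab) (T k)"
  shows "length (snd (T k)) = length (snd (T 0)) - k"
proof (induction k)
  case 0 then show ?case by simp
next
  case (Suc k)
  have "length (snd (tail (Gg E sp I prev lab) (T k))) = length (snd (T k)) - 1" by (rule Gg_tail_len)
  then show ?case using Suc assms by simp
qed

lemma walk_fst: assumes "\<forall>k. T (Suc k) = tail (Gg E sp I prev lab) (T k)"
  shows "k \<le> length (snd (T 0)) \<Longrightarrow> fst (T k) = fst (T 0)"
proof (induction k)
  case 0 then show ?case by simp
next
  case (Suc k)
  have "length (snd (T k)) \<noteq> 0" using walk_len[OF assms, of k] Suc.prems by simp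
  then have "snd (T k) \<noteq> []" by simp
  then show ?case using Suc assms Gg_tail_fst by (metis Suc_leD)
qed

lemma walk_spine: assumes "\<forall>k. T (Suc k) = tail (Gg E sp I prev lab) (T k)" "snd (T K) = []"
  shows "T (K + j) = ((prev ^^ j) (fst (T K)), [])"
proof (induction j)
  case 0 then show ?case using assms(2) by (cases "T K") simp
next
  case (Suc j)
  then show ?case using assms(1) by (simp add: Gg_tail)
qed

lemma walk_K: assumes "\<forall>k. T (Suc k) = tail (Gg E sp I prev lab) (T k)"
  shows "T (length (snd (T 0))) = (fst (T 0), [])"
proof -
  let ?K = "length (snd (T 0))"
  have "length (snd (T ?K)) = 0" using walk_len[OF assms, of ?K] by simp
  moreover have "fst (T ?K) = fst (T 0)" by (rule walk_fst[OF assms]) simp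
  ultimately show ?thesis by (cases "T ?K") simp
qed

lemma cyc_walk_noninj:
  assumes m: "0 < m" and T: "\<forall>k. T (Suc k) = tail (Gg E sp {..<m} (\<lambda>i. (i + m - 1) mod m) lab) (T k)"
    and Tv: "\<forall>k. T k \<in> verts (Gg E sp {..<m} (\<lambda>i. (i + m - 1) mod m) lab)"
  shows "\<not> inj T"
proof
  assume inj: "inj T"
  let ?K = "length (snd (T 0))"
  have TK: "T ?K = (fst (T 0), [])" using walk_K[OF T] .
  have t: "fst (T 0) < m" using Tv[rule_format, of ?K] TK by (simp add: Gg_verts)
  have "T (?K + m) = (((\<lambda>i. (i + m - 1) mod m) ^^ m) (fst (T 0)), [])"
    using walk_spine[OF T, of ?K m] TK by simp
  also have "\<dots> = T ?K" using M3[OF m t] TK by simp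
  finally have "?K + m = ?K" using inj by (simp add: inj_eq)
  then show False using m by simp
qed

lemma iso_Gg_spine:
  assumes iso: "rep_iso (Gg E sp I prev lab) (Gg_phiV E lab) (Gg_phiA lab) (Gg E' sp' I' prev' lab') (Gg_phiV E' lab') (Gg_phiA lab')"
  shows "\<exists>aV. inj_on aV (verts (Gg E sp I prev lab)) \<and>
     (\<forall>i\<in>I. aV (i, []) \<in> verts (Gg E' sp' I' prev' lab') \<and>
        tail (Gg E' sp' I' prev' lab') (aV (i, [])) = aV (prev i, []) \<and> Gg_phiA lab' (aV (i, [])) = lab i)"
proof -
  let ?F = "Gg E sp I prev lab" and ?G = "Gg E' sp' I' prev' lab'"
  obtain aV aA where a: "bij_betw aV (verts ?F) (verts ?G)" "bij_betw aA (arcs ?F) (arcs ?G)"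
    "\<forall>f\<in>arcs ?F. tail ?G (aA f) = aV (tail ?F f) \<and> head ?G (aA f) = aV (head ?F f)"
    "\<forall>f\<in>arcs ?F. Gg_phiA lab' (aA f) = Gg_phiA lab f"
    using iso unfolding rep_iso_def by blast
  have "\<forall>i\<in>I. aV (i, []) \<in> verts ?G \<and> tail ?G (aV (i, [])) = aV (prev i, []) \<and> Gg_phiA lab' (aV (i, [])) = lab i"
  proof
    fix i assume i: "i \<in> I"
    have w: "(i, []) \<in> verts ?F" using i by (simp add: Gg_verts)
    have h: "aA (i, []) = aV (i, [])" using a(3) w by (simp add: Gg_arcs Gg_head)
    have "aV (i, []) \<in> verts ?G" using a(1) w by (auto simp: bij_betw_def)
    moreover have "tail ?G (aA (i, [])) = aV (tail ?F (i, []))" using a(3) w by (simp add: Gg_arcs)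
    moreover have "Gg_phiA lab' (aA (i, [])) = Gg_phiA lab (i, [])" using a(4) w by (simp add: Gg_arcs)
    ultimately show "aV (i, []) \<in> verts ?G \<and> tail ?G (aV (i, [])) = aV (prev i, []) \<and> Gg_phiA lab' (aV (i, [])) = lab i"
      using h by (simp add: Gg_tail Gg_phiA_simp)
  qed
  then show ?thesis using a(1) unfolding bij_betw_def by blast
qed

lemma Ginf_not_Gc: assumes "0 < m"
  shows "\<not> rep_iso (Gg E sp UNIV Suc x) (Gg_phiV E x) (Gg_phiA x)
     (Gg E' sp' {..<m} (\<lambda>i. (i + m - 1) mod m) lab') (Gg_phiV E' lab') (Gg_phiA lab')"
proof
  assume iso: "rep_iso (Gg E sp UNIV Suc x) (Gg_phiV E x) (Gg_phiA x)
     (Gg E' sp' {..<m} (\<lambda>i. (i + m - 1) mod m) lab') (Gg_phiV E' lab') (Gg_phiA lab')"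
  obtain aV where a1: "inj_on aV (verts (Gg E sp UNIV Suc x))" and
     a0: "\<forall>i\<in>UNIV. aV (i, []) \<in> verts (Gg E' sp' {..<m} (\<lambda>i. (i + m - 1) mod m) lab') \<and>
        tail (Gg E' sp' {..<m} (\<lambda>i. (i + m - 1) mod m) lab') (aV (i, [])) = aV (Suc i, []) \<and> Gg_phiA lab' (aV (i, [])) = x i"
    using iso_Gg_spine[OF iso] by blast
  have a: "\<forall>i. aV (i, []) \<in> verts (Gg E' sp' {..<m} (\<lambda>i. (i + m - 1) mod m) lab') \<and>
        tail (Gg E' sp' {..<m} (\<lambda>i. (i + m - 1) mod m) lab') (aV (i, [])) = aV (Suc i, [])"
    using a0 by simp
  let ?T = "\<lambda>k. aV (k, [])"
  have "inj ?T"
  proof (rule injI)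
    fix k k' assume e: "aV (k, []) = aV (k', [])"
    have "(k, []) \<in> verts (Gg E sp UNIV Suc x)" "(k', []) \<in> verts (Gg E sp UNIV Suc x)" by (simp_all add: Gg_verts)
    then have "(k, []) = (k', [])" using inj_onD[OF a1 e] by blast
    then show "k = k'" by simp
  qed
  moreover have "\<not> inj ?T" by (rule cyc_walk_noninj[OF assms]) (use a in auto)
  ultimately show False by blast
qed

lemma Ginf_equiv:
  assumes iso: "rep_iso (Gg E sp UNIV Suc x) (Gg_phiV E x) (Gg_phiA x)
     (Gg E' sp' UNIV Suc x') (Gg_phiV E' x') (Gg_phiA x')"
  shows "inf_equiv x x'"
proof -
  obtain aV where a1: "inj_on aV (verts (Gg E sp UNIV Suc x))" and a0: "\<forall>i\<in>UNIV. aV (i, []) \<in> verts (Gg E' sp' UNIV Suc x') \<and>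
        tail (Gg E' sp' UNIV Suc x') (aV (i, [])) = aV (Suc i, []) \<and> Gg_phiA x' (aV (i, [])) = x i"
    using iso_Gg_spine[OF iso] by blast
  have a: "\<forall>i. aV (i, []) \<in> verts (Gg E' sp' UNIV Suc x') \<and>
        tail (Gg E' sp' UNIV Suc x') (aV (i, [])) = aV (Suc i, []) \<and> Gg_phiA x' (aV (i, [])) = x i"
    using a0 by simp
  let ?T = "\<lambda>k. aV (k, [])"
  have T: "\<forall>k. ?T (Suc k) = tail (Gg E' sp' UNIV Suc x') (?T k)" using a by simp
  let ?K = "length (snd (?T 0))"
  have TK: "?T ?K = (fst (?T 0), [])" using walk_K[OF T] .
  have "\<forall>j. x (?K + j) = x' (fst (?T 0) + j)"
  proof
    fix j
    have "?T (?K + j) = ((Suc ^^ j) (fst (?T 0)), [])" using walk_spine[OF T, of ?K j] TK by simp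
    then have "?T (?K + j) = (j + fst (?T 0), [])" by (simp add: funpow_Suc_plus)
    then show "x (?K + j) = x' (fst (?T 0) + j)" using a by (metis Gg_phiA_simp add.commute)
  qed
  then show ?thesis unfolding inf_equiv_def by blast
qed

lemma Gc_equiv:
  assumes p: "0 < length y" and m: "0 < length y'"
  and iso: "rep_iso (Gg E sp {..<length y} (\<lambda>i. (i + length y - 1) mod length y) ((!) y)) (Gg_phiV E ((!) y)) (Gg_phiA ((!) y))
     (Gg E' sp' {..<length y'} (\<lambda>i. (i + length y' - 1) mod length y') ((!) y')) (Gg_phiV E' ((!) y')) (Gg_phiA ((!) y'))"
  shows "cyc_equiv y y'"
proof -
  let ?p = "length y" and ?m = "length y'"
  let ?Pp = "\<lambda>i. (i + ?p - 1) mod ?p" and ?Pm = "\<lambda>i. (i + ?m - 1) mod ?m"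
  let ?G = "Gg E' sp' {..<?m} ?Pm ((!) y')"
  obtain aV where ai: "inj_on aV (verts (Gg E sp {..<?p} ?Pp ((!) y)))" and
     a: "\<forall>i\<in>{..<?p}. aV (i, []) \<in> verts ?G \<and>
        tail ?G (aV (i, [])) = aV (?Pp i, []) \<and> Gg_phiA ((!) y') (aV (i, [])) = y ! i"
    using iso_Gg_spine[OF iso] by blast
  let ?cv = "\<lambda>k. aV (k, [])"
  have Ppl: "?Pp i < ?p" for i using p by simp
  have itp: "(?Pp ^^ n) k < ?p" if "k < ?p" for k n using that p by (cases n) auto
  have L: "length (snd (?cv ((?Pp ^^ n) k))) = length (snd (?cv k)) - n" if k: "k < ?p" for k n
  proof (induction n)
    case 0 then show ?case by simp
  next
    case (Suc n)
    have "?cv ((?Pp ^^ Suc n) k) = tail ?G (?cv ((?Pp ^^ n) k))" using a itp[OF k, of n] by simp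
    moreover have "length (snd (tail ?G (?cv ((?Pp ^^ n) k)))) = length (snd (?cv ((?Pp ^^ n) k))) - 1"
      by (rule Gg_tail_len)
    ultimately show ?case using Suc.IH by simp
  qed
  have L0: "snd (?cv k) = []" if k: "k < ?p" for k
  proof -
    have "length (snd (?cv k)) = length (snd (?cv k)) - ?p" using L[OF k, of ?p] M3[OF p k] by simp
    then have "length (snd (?cv k)) = 0" using p by arith
    then show ?thesis by simp
  qed
  define t where "t k = fst (?cv k)" for k
  have cvt: "?cv k = (t k, [])" if "k < ?p" for k using L0[OF that] unfolding t_def by (cases "?cv k") simp
  have tm: "t k < ?m" if "k < ?p" for k
  proof -
    have "aV (k, []) \<in> verts ?G" using a that by blast
    then show ?thesis using cvt[OF that] by (simp add: Gg_verts)
  qed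
  have tprev: "t (?Pp k) = ?Pm (t k)" if k: "k < ?p" for k
  proof -
    have "tail ?G (?cv k) = ?cv (?Pp k)" using a k by simp
    then show ?thesis using cvt[OF k] cvt[OF Ppl[of k]] by (simp add: Gg_tail)
  qed
  have tk: "t k = (t 0 + k) mod ?m" if "k < ?p" for k
    using that
  proof (induction k)
    case 0 then show ?case using tm[OF p] by simp
  next
    case (Suc k)
    have "?Pp (Suc k) = k" using M1[OF p Suc.prems] by simp
    then have "t k = ?Pm (t (Suc k))" using tprev[OF Suc.prems] by simp
    then have "t (Suc k) = (t k + 1) mod ?m" using M4[OF m tm[OF Suc.prems]] by simp
    then show ?case using Suc by (simp add: mod_Suc_eq)
  qed
  have pm1: "?p \<le> ?m"
  proof -
    have "inj_on t {..<?p}"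
    proof (rule inj_onI)
      fix k k' assume "k \<in> {..<?p}" "k' \<in> {..<?p}" "t k = t k'"
      then have e: "?cv k = ?cv k'" using cvt by auto
      have "(k, []) \<in> verts (Gg E sp {..<?p} ?Pp ((!) y))" "(k', []) \<in> verts (Gg E sp {..<?p} ?Pp ((!) y))"
        using \<open>k \<in> {..<?p}\<close> \<open>k' \<in> {..<?p}\<close> by (simp_all add: Gg_verts)
      then have "(k, []) = (k', [])" using inj_onD[OF ai e] by blast
      then show "k = k'" by simp
    qed
    moreover have "t ` {..<?p} \<subseteq> {..<?m}" using tm by auto
    ultimately show ?thesis using card_inj_on_le[of t "{..<?p}" "{..<?m}"] by simp
  qed
  have pm2: "?m \<le> ?p"
  proof -
    have p1: "?p - 1 < ?p" using p by simp
    have "?Pp 0 = ?p - 1" using M1[OF p p] by simp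
    then have "t (?p - 1) = ?Pm (t 0)" using tprev[OF p] by simp
    then have "t 0 = (t (?p - 1) + 1) mod ?m" using M4[OF m tm[OF p]] by simp
    also have "\<dots> = ((t 0 + (?p - 1)) mod ?m + 1) mod ?m" using tk[OF p1] by simp
    also have "\<dots> = (t 0 + ?p) mod ?m"
    proof -
      have e: "t 0 + (?p - 1) + 1 = t 0 + ?p" using p by arith
      show ?thesis by (simp only: mod_add_left_eq e)
    qed
    finally have "(t 0 + ?p) mod ?m = t 0 mod ?m" using tm[OF p] by simp
    then have "?m dvd (t 0 + ?p) - t 0" using mod_eq_dvd_iff_nat[of "t 0" "t 0 + ?p" ?m] by simp
    then have "?m dvd ?p" by simp
    then show ?thesis using p by (simp add: dvd_imp_le)
  qed
  have pm: "?p = ?m" using pm1 pm2 by simp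
  have yrot: "y = rotate (t 0) y'"
  proof (rule nth_equalityI)
    show "length y = length (rotate (t 0) y')" using pm by simp
    fix k assume k: "k < length y"
    have "y ! k = Gg_phiA ((!) y') (?cv k)" using a k by simp
    also have "\<dots> = y' ! ((t 0 + k) mod ?m)" using cvt[OF k] tk[OF k] by (simp add: Gg_phiA_simp)
    also have "\<dots> = rotate (t 0) y' ! k" using nth_rotate[of k y' "t 0"] k pm by simp
    finally show "y ! k = rotate (t 0) y' ! k" .
  qed
  show ?thesis
  proof (cases "t 0 = 0")
    case True
    then have "y = drop ?m y' @ take ?m y'" using yrot by simp
    moreover have "1 \<le> ?m" using m by linarith
    ultimately show ?thesis unfolding cyc_equiv_def by (intro exI[of _ ?m]) simp
  next
    case False
    have "t 0 < ?m" using tm[OF p] .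
    then have "y = drop (t 0) y' @ take (t 0) y'" using yrot rotate_drop_take[of "t 0" y'] by simp
    then show ?thesis unfolding cyc_equiv_def using False \<open>t 0 < ?m\<close> by (intro exI[of _ "t 0"]) simp
  qed
qed



lemma isG_Ghost: "isG c \<Longrightarrow> Ghost (unD c) = c" by (cases c) auto
lemma notG_Real: "\<not> isG c \<Longrightarrow> Real (unD c) = c" by (cases c) auto
lemma map_G: "\<forall>c\<in>set y. isG c \<Longrightarrow> map Ghost (map unD y) = y" by (induct y) (auto simp: isG_Ghost)
lemma map_R: "\<forall>c\<in>set y. \<not> isG c \<Longrightarrow> map Real (map unD y) = y" by (induct y) (auto simp: notG_Real)

lemma cyc_Xc:
  assumes erg: "ext_rep_graph E sp F phiV phiA" and ne: "y \<noteq> []"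
    and cd: "\<forall>k<length y. cv k \<in> verts F \<and> (\<exists>f. in_arcs F (cv k) = {f} \<and>
              tail F f = cv ((k + length y - 1) mod length y) \<and> phiA f = y ! k)"
  shows "y \<in> Xc E"
proof -
  let ?p = "length y"
  let ?P = "\<lambda>k. (k + ?p - 1) mod ?p"
  have p: "0 < ?p" using ne by simp
  define fa where "fa k = (SOME f. in_arcs F (cv k) = {f} \<and> tail F f = cv (?P k) \<and> phiA f = y ! k)" for k
  have fa: "in_arcs F (cv k) = {fa k} \<and> tail F (fa k) = cv (?P k) \<and> phiA (fa k) = y ! k" if "k < ?p" for k
  proof -
    have "\<exists>f. in_arcs F (cv k) = {f} \<and> tail F f = cv (?P k) \<and> phiA f = y ! k" using cd that by blast
    then show ?thesis unfolding fa_def by (rule someI_ex)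
  qed
  have fa2: "fa k \<in> arcs F \<and> head F (fa k) = cv k" if "k < ?p" for k using fa[OF that] by (auto simp: in_arcs_def)
  have yk: "y ! k \<in> dedges E \<and> dsrc E (y ! k) = phiV (cv (?P k)) \<and> drng E (y ! k) = phiV (cv k)" if k: "k < ?p" for k
    using erg_arc[OF erg, of "fa k"] fa[OF k] fa2[OF k] by auto
  have setd: "set y \<subseteq> dedges E" using yk by (auto simp: in_set_conv_nth)
  have succ: "successively (\<lambda>a b. drng E a = dsrc E b) y"
    unfolding successively_conv_nth
  proof (intro allI impI)
    fix i assume i: "Suc i < ?p"
    have "?P (Suc i) = i" using M1[OF p i] by simp
    then show "drng E (y ! i) = dsrc E (y ! Suc i)" using yk[OF i] yk[of i] i by simp
  qed
  have closed: "dsrc E (hd y) = drng E (last y)"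
  proof -
    have "?P 0 = ?p - 1" using M1[OF p p] by simp
    then show ?thesis using yk[OF p] yk[of "?p - 1"] ne by (simp add: hd_conv_nth last_conv_nth)
  qed
  have pair: "basis_word E sp [y ! k, y ! (Suc k mod ?p)]" if k: "k < ?p" for k
  proof -
    let ?k' = "Suc k mod ?p"
    have k': "?k' < ?p" using p by simp
    have "?P ?k' = k"
    proof (cases "Suc k = ?p")
      case True
      then have "?k' = 0" by simp
      then show ?thesis using M1[OF p p] True by simp
    next
      case False
      then have sk: "Suc k < ?p" using k by simp
      then have "?k' = Suc k" by simp
      then show ?thesis using M1[OF p sk] by simp
    qed
    then have "tail F (fa ?k') = cv k" using fa[OF k'] by simp
    then have o: "fa ?k' \<in> out_arcs F (cv k)" using fa2[OF k'] by (simp add: out_arcs_def)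
    have cvv: "cv k \<in> verts F" using cd k by blast
    have "phiA (fa ?k') \<in> olbl E sp F phiV phiA (cv k)" using erg_lbl[OF erg cvv o] .
    then show ?thesis using fa[OF k] fa[OF k'] by (simp add: olbl_def)
  qed
  have ghost_prop: "isG (y ! ((k0 + j) mod ?p))" if k0: "k0 < ?p" "isG (y ! k0)" for k0 j
  proof (induction j)
    case 0 then show ?case using k0 by simp
  next
    case (Suc j)
    let ?k = "(k0 + j) mod ?p"
    have k: "?k < ?p" using p by simp
    have "basis_word E sp [y ! ?k, y ! (Suc ?k mod ?p)]" using pair[OF k] .
    moreover have "Suc ?k mod ?p = (k0 + Suc j) mod ?p" by (simp add: mod_Suc_eq)
    ultimately have "basis_word E sp [y ! ?k, y ! ((k0 + Suc j) mod ?p)]" by simp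
    then show ?case using Suc unfolding basis2 pok_def
      by (cases "y ! ?k"; cases "y ! ((k0 + Suc j) mod ?p)") auto
  qed
  have kind: "(\<forall>c\<in>set y. isG c) \<or> (\<forall>c\<in>set y. \<not> isG c)"
  proof (cases "\<exists>k0<?p. isG (y ! k0)")
    case True
    then obtain k0 where k0: "k0 < ?p" "isG (y ! k0)" by blast
    have "isG (y ! l)" if l: "l < ?p" for l
    proof -
      have "(k0 + (l + ?p - k0)) mod ?p = l" using l k0 by simp
      then show ?thesis using ghost_prop[OF k0, of "l + ?p - k0"] by simp
    qed
    then show ?thesis by (auto simp: in_set_conv_nth)
  next
    case False
    then show ?thesis by (auto simp: in_set_conv_nth)
  qed
  have "(\<exists>q. y = map Real q) \<or> (\<exists>q. y = map Ghost q)"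
  proof (cases "\<forall>c\<in>set y. isG c")
    case True
    have "y = map Ghost (map unD y)" using map_G[OF True] by simp
    then show ?thesis by blast
  next
    case False
    then have "\<forall>c\<in>set y. \<not> isG c" using kind by blast
    then have "y = map Real (map unD y)" using map_R by metis
    then show ?thesis by blast
  qed
  then show ?thesis unfolding Xc_def dpath_def using ne setd succ closed by blast
qed

lemma mod_cancel_nat: "((a::nat) + c) mod n = (b + c) mod n \<Longrightarrow> a mod n = b mod n"
  by (simp add: nat_mod_eq_iff)

theorem classify:
  fixes F :: "('v,'e) dgraph"
  assumes wfE: "egraph_wf E"
    and R1: "R \<subseteq> Xinf E sp" and R2: "\<forall>x\<in>Xinf E sp. \<exists>!z. z \<in> R \<and> inf_equiv x z"
    and S1: "S \<subseteq> Xc E" and S2: "\<forall>x\<in>Xc E. \<exists>!z. z \<in> S \<and> cyc_equiv x z"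
    and NF: "ne_conn_erg E sp F phiV phiA"
  shows "(\<exists>v\<in>V0 E. rep_iso F phiV phiA (Fv E sp v) (Fv_phiV E) Fv_phiA) \<or>
         (\<exists>x\<in>R. rep_iso F phiV phiA (Finf E sp x) (Finf_phiV E x) (Finf_phiA x)) \<or>
         (\<exists>y\<in>S. rep_iso F phiV phiA (Fc E sp y) (Fc_phiV E y) (Fc_phiA y))"
proof -
  have erg: "ext_rep_graph E sp F phiV phiA" and conn: "dg_connected F" and ne: "verts F \<noteq> {}"
    using NF by (auto simp: ne_conn_erg_def)
  obtain u0 where u0: "u0 \<in> verts F" using ne by blast
  define bk where "bk v = tail F (SOME f. f \<in> in_arcs F v)" for v
  define u where "u k = (bk ^^ k) u0" for k
  have uS: "u (Suc k) = bk (u k)" for k by (simp add: u_def)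
  have uadd: "u (a + b) = (bk ^^ b) (u a)" for a b
    unfolding u_def by (subst add.commute) (simp add: funpow_add)
  have step: "\<exists>f. in_arcs F v = {f} \<and> bk v = tail F f \<and> bk v \<in> verts F"
    if v: "v \<in> verts F" and nv: "in_arcs F v \<noteq> {}" for v
  proof -
    obtain f where f: "in_arcs F v = {f}" using erg_in[OF erg v] nv by blast
    then have b: "bk v = tail F f" unfolding bk_def by simp
    have fa: "f \<in> arcs F" using f by (auto simp: in_arcs_def)
    have "tail F f \<in> verts F" using erg_arc[OF erg fa] by blast
    then show ?thesis using f b by (intro exI[of _ f]) simp
  qed
  show ?thesis
  proof (cases "\<exists>k. in_arcs F (u k) = {}")
    case True
    define k0 where "k0 = (LEAST k. in_arcs F (u k) = {})"
    have k0: "in_arcs F (u k0) = {}" unfolding k0_def using True by (rule LeastI_ex)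
    have lt: "in_arcs F (u j) \<noteq> {}" if "j < k0" for j using that unfolding k0_def using not_less_Least by blast
    have "u j \<in> verts F" if "j \<le> k0" for j
      using that
    proof (induction j)
      case 0 then show ?case using u0 by (simp add: u_def)
    next
      case (Suc j)
      then have "u j \<in> verts F" "in_arcs F (u j) \<noteq> {}" using lt by auto
      then show ?case using step uS by metis
    qed
    then have r: "u k0 \<in> verts F" by simp
    have "rep_iso F phiV phiA (Fv E sp (phiV (u k0))) (Fv_phiV E) Fv_phiA" by (rule tree_iso[OF erg conn r k0])
    moreover have "phiV (u k0) \<in> V0 E" using erg_V[OF erg r] .
    ultimately show ?thesis by blast
  next
    case False
    then have nz: "in_arcs F (u k) \<noteq> {}" for k by blast
    have uv: "u k \<in> verts F" for k
    proof (induction k)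
      case 0 then show ?case using u0 by (simp add: u_def)
    next
      case (Suc k) then show ?case using step[OF Suc nz] uS by metis
    qed
    define a where "a k = phiA (SOME f. f \<in> in_arcs F (u k))" for k
    have SP: "\<exists>f. in_arcs F (u k) = {f} \<and> tail F f = u (Suc k) \<and> phiA f = a k" for k
    proof -
      obtain f where f: "in_arcs F (u k) = {f}" "bk (u k) = tail F f" using step[OF uv nz] by blast
      then show ?thesis using uS unfolding a_def by auto
    qed
    have aX: "a \<in> Xinf E sp" unfolding Xinf_iff
    proof
      fix k
      obtain f1 where f1: "in_arcs F (u (Suc k)) = {f1}" "phiA f1 = a (Suc k)" using SP by blast
      obtain f0 where f0: "in_arcs F (u k) = {f0}" "tail F f0 = u (Suc k)" "phiA f0 = a k" using SP by blast
      have "f0 \<in> out_arcs F (u (Suc k))" using f0 by (auto simp: in_arcs_def out_arcs_def)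
      then have "phiA f0 \<in> olbl E sp F phiV phiA (u (Suc k))" using erg_lbl[OF erg uv] by blast
      then show "basis_word E sp [a (Suc k), a k]" using f0 f1 by (simp add: olbl_def)
    qed
    show ?thesis
    proof (cases "inj u")
      case True
      obtain z where z: "z \<in> R" "inf_equiv a z" using R2 aX by blast
      obtain m n where mn: "\<forall>k. a (m + k) = z (n + k)" using z(2) unfolding inf_equiv_def by blast
      have zX: "z \<in> Xinf E sp" using R1 z by blast
      have i1: "rep_iso F phiV phiA (Gg E sp UNIV Suc (\<lambda>k. z (n + k))) (Gg_phiV E (\<lambda>k. z (n + k))) (Gg_phiA (\<lambda>k. z (n + k)))"
      proof (rule GD_iso[where S = "\<lambda>k. u (m + k)", OF erg conn])
        show "UNIV \<noteq> {}" by simp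
        show "\<forall>i\<in>UNIV. Suc i \<in> UNIV" by simp
        show "inj_on (\<lambda>k. u (m + k)) UNIV"
        proof (rule inj_onI)
          fix k k' assume "u (m + k) = u (m + k')"
          then have "m + k = m + k'" using True by (simp add: inj_eq)
          then show "k = k'" by simp
        qed
        show "\<forall>i\<in>UNIV. u (m + i) \<in> verts F \<and> (\<exists>f. in_arcs F (u (m + i)) = {f} \<and> tail F f = u (m + Suc i) \<and> phiA f = z (n + i))"
        proof
          fix i :: nat
          have e: "a (m + i) = z (n + i)" using mn by blast
          show "u (m + i) \<in> verts F \<and> (\<exists>f. in_arcs F (u (m + i)) = {f} \<and> tail F f = u (m + Suc i) \<and> phiA f = z (n + i))"
            using SP[of "m + i"] uv[of "m + i"] e by simp
        qed
      qed
      have Fz: "ne_conn_erg E sp (Gg E sp UNIV Suc z) (Gg_phiV E z) (Gg_phiA z)" using Finf_ne_conn'[OF wfE zX] .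
      then have ergz: "ext_rep_graph E sp (Gg E sp UNIV Suc z) (Gg_phiV E z) (Gg_phiA z)"
        and connz: "dg_connected (Gg E sp UNIV Suc z)" by (auto simp: ne_conn_erg_def)
      have i2: "rep_iso (Gg E sp UNIV Suc z) (Gg_phiV E z) (Gg_phiA z) (Gg E sp UNIV Suc (\<lambda>k. z (n + k))) (Gg_phiV E (\<lambda>k. z (n + k))) (Gg_phiA (\<lambda>k. z (n + k)))"
      proof (rule GD_iso[where S = "\<lambda>k. (n + k, [])", OF ergz connz])
        show "UNIV \<noteq> {}" by simp
        show "\<forall>i\<in>UNIV. Suc i \<in> UNIV" by simp
        show "inj_on (\<lambda>k. (n + k, [] :: 'b dedge list)) UNIV" by (auto simp: inj_on_def)
        show "\<forall>i\<in>UNIV. (n + i, []) \<in> verts (Gg E sp UNIV Suc z) \<and> (\<exists>f. in_arcs (Gg E sp UNIV Suc z) (n + i, []) = {f} \<and>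
            tail (Gg E sp UNIV Suc z) f = (n + Suc i, []) \<and> Gg_phiA z f = z (n + i))"
        proof
          fix i :: nat
          have v: "(n + i, []) \<in> verts (Gg E sp UNIV Suc z)" by (simp add: Gg_verts)
          show "(n + i, []) \<in> verts (Gg E sp UNIV Suc z) \<and> (\<exists>f. in_arcs (Gg E sp UNIV Suc z) (n + i, []) = {f} \<and>
            tail (Gg E sp UNIV Suc z) f = (n + Suc i, []) \<and> Gg_phiA z f = z (n + i))"
            using v Gg_in_arcs[OF v] by (simp add: Gg_tail Gg_phiA_simp)
        qed
      qed
      have wfz: "dgraph_wf (Gg E sp UNIV Suc z)" using erg_wf[OF ergz] .
      have "rep_iso F phiV phiA (Gg E sp UNIV Suc z) (Gg_phiV E z) (Gg_phiA z)"
        using rep_iso_trans[OF i1 rep_iso_sym[OF i2 wfz]] .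
      then have "rep_iso F phiV phiA (Finf E sp z) (Finf_phiV E z) (Finf_phiA z)"
        by (simp add: Finf_Gg Finf_phiV_Gg Finf_phiA_Gg)
      then show ?thesis using z(1) by blast
    next
      case False
      obtain x y where xy: "x \<noteq> y" "u x = u y" using False unfolding inj_def by blast
      define i where "i = min x y"
      define j where "j = max x y"
      have ij: "i < j" "u i = u j" using xy unfolding i_def j_def by (auto simp: min_def max_def)
      have PER: "u (k + q) = u k" if e: "u (c + q) = u c" and ck: "c \<le> k" for c q k
      proof -
        have "u (k + q) = u ((c + q) + (k - c))" using ck by (simp add: algebra_simps)
        also have "\<dots> = (bk ^^ (k - c)) (u (c + q))" by (rule uadd)
        also have "\<dots> = (bk ^^ (k - c)) (u c)" using e by simp
        also have "\<dots> = u (c + (k - c))" by (rule uadd[symmetric])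
        also have "\<dots> = u k" using ck by simp
        finally show ?thesis .
      qed
      define p where "p = (LEAST q. 0 < q \<and> u (i + q) = u i)"
      have ex: "0 < j - i \<and> u (i + (j - i)) = u i" using ij by simp
      have pp: "0 < p \<and> u (i + p) = u i" unfolding p_def by (rule LeastI[of _ "j - i"]) (rule ex)
      have p0: "0 < p" using pp by simp
      have pmin: "u (i + q) \<noteq> u i" if "0 < q" "q < p" for q
        using that unfolding p_def using not_less_Least by blast
      have H: False if st: "s' < t'" "t' < p" and e: "u (i + s') = u (i + t')" for s' t'
      proof -
        have e1: "u ((i + s') + (t' - s')) = u (i + s')" using e st by simp
        have "u ((i + p) + (t' - s')) = u (i + p)" using PER[OF e1, of "i + p"] st by simp
        then have A: "u ((i + p) + (t' - s')) = u i" using pp by simp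
        have B: "u ((i + (t' - s')) + p) = u (i + (t' - s'))" using PER[of i p "i + (t' - s')"] pp by simp
        have C: "(i + (t' - s')) + p = (i + p) + (t' - s')" by simp
        have U: "u (i + (t' - s')) = u i" using A B C by metis
        have "0 < t' - s'" "t' - s' < p" using st by auto
        then show False using pmin U by blast
      qed
      have dist: "s = t" if "s < p" "t < p" "u (i + s) = u (i + t)" for s t
      proof (rule ccontr)
        assume "s \<noteq> t"
        then show False using H that by (metis linorder_neqE_nat)
      qed
      define y0 where "y0 = map (\<lambda>k. a (i + p - 1 - k)) [0..<p]"
      define cv0 where "cv0 k = u (i + p - 1 - k)" for k
      have ly0: "length y0 = p" by (simp add: y0_def)
      have CD0: "cv0 k \<in> verts F \<and> (\<exists>f. in_arcs F (cv0 k) = {f} \<and> tail F f = cv0 ((k + p - 1) mod p) \<and> phiA f = y0 ! k)"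
        if k: "k < p" for k
      proof -
        obtain f where f: "in_arcs F (u (i + p - 1 - k)) = {f}" "tail F f = u (Suc (i + p - 1 - k))" "phiA f = a (i + p - 1 - k)"
          using SP by blast
        have s1: "Suc (i + p - 1 - k) = i + p - k" using k by arith
        have s2: "cv0 ((k + p - 1) mod p) = u (i + p - k)"
        proof (cases "k = 0")
          case True
          then have "(k + p - 1) mod p = p - 1" using M1[OF p0 k] by simp
          moreover have "i + p - 1 - (p - 1) = i" using p0 by arith
          ultimately show ?thesis using True pp unfolding cv0_def by simp
        next
          case False
          then have "(k + p - 1) mod p = k - 1" using M1[OF p0 k] by simp
          moreover have "i + p - 1 - (k - 1) = i + p - k" using False k by arith
          ultimately show ?thesis unfolding cv0_def by simp
        qed
        have s3: "y0 ! k = a (i + p - 1 - k)" using k by (simp add: y0_def)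
        show ?thesis using f uv s1 s2 s3 unfolding cv0_def by auto
      qed
      have inj0: "inj_on cv0 {..<p}"
      proof (rule inj_onI)
        fix k k' assume kk: "k \<in> {..<p}" "k' \<in> {..<p}" "cv0 k = cv0 k'"
        have e1: "i + p - 1 - k = i + (p - 1 - k)" "i + p - 1 - k' = i + (p - 1 - k')" using kk by auto
        have "u (i + (p - 1 - k)) = u (i + (p - 1 - k'))" using kk(3) e1 unfolding cv0_def by simp
        then have "p - 1 - k = p - 1 - k'" using dist p0 by simp
        then show "k = k'" using kk by auto
      qed
      have y0X: "y0 \<in> Xc E"
        by (rule cyc_Xc[where cv = cv0, OF erg]) (use CD0 ly0 p0 in auto)
      obtain z where z: "z \<in> S" "cyc_equiv y0 z" using S2 y0X by blast
      obtain k where k: "1 \<le> k" "k \<le> length z" "y0 = drop k z @ take k z" using z(2) unfolding cyc_equiv_def by blast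
      have lz: "length z = p" using k ly0 by (metis length_append length_drop length_take add.commute le_add_diff_inverse min_absorb2)
      have yrot: "y0 = rotate k z"
      proof (cases "k = length z")
        case True then show ?thesis using k by simp
      next
        case False then have "k < length z" using k by simp
        then show ?thesis using k rotate_drop_take[of k z] by simp
      qed
      define t where "t = p - k mod p"
      have zrot: "z = rotate t y0"
      proof -
        have "rotate t y0 = rotate (t + k) z" using yrot by (simp add: rotate_rotate)
        moreover have "(t + k) mod length z = 0"
        proof (cases "k = p")
          case True then show ?thesis using lz unfolding t_def by simp
        next
          case False then have "k < p" using k lz by simp
          then show ?thesis using lz unfolding t_def by simp
        qed
        ultimately show ?thesis by simp
      qed
      define cv where "cv k' = cv0 ((k' + t) mod p)" for k'
      have CD: "\<forall>k'\<in>{..<p}. cv k' \<in> verts F \<and> (\<exists>f. in_arcs F (cv k') = {f} \<and>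
                  tail F f = cv ((k' + p - 1) mod p) \<and> phiA f = z ! k')"
      proof
        fix k' assume k': "k' \<in> {..<p}"
        let ?k1 = "(k' + t) mod p"
        have k1: "?k1 < p" using p0 by simp
        obtain f where f: "cv0 ?k1 \<in> verts F" "in_arcs F (cv0 ?k1) = {f}" "tail F f = cv0 ((?k1 + p - 1) mod p)" "phiA f = y0 ! ?k1"
          using CD0[OF k1] by blast
        have "(?k1 + p - 1) mod p = (?k1 + (p - 1)) mod p" using M5[OF p0] .
        also have "\<dots> = (k' + t + (p - 1)) mod p" by (simp add: mod_add_left_eq)
        also have "\<dots> = (k' + (p - 1) + t) mod p" by (simp add: ac_simps)
        also have "\<dots> = ((k' + (p - 1)) mod p + t) mod p" by (simp add: mod_add_left_eq)
        also have "\<dots> = ((k' + p - 1) mod p + t) mod p" using M5[OF p0, of k'] by simp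
        finally have m1: "(?k1 + p - 1) mod p = ((k' + p - 1) mod p + t) mod p" .
        have m2: "z ! k' = y0 ! ?k1" using zrot nth_rotate[of k' y0 t] ly0 k' by (simp add: add.commute)
        show "cv k' \<in> verts F \<and> (\<exists>f. in_arcs F (cv k') = {f} \<and> tail F f = cv ((k' + p - 1) mod p) \<and> phiA f = z ! k')"
          using f m1 m2 unfolding cv_def by auto
      qed
      have injc: "inj_on cv {..<p}"
      proof (rule inj_onI)
        fix k1 k2 assume kk: "k1 \<in> {..<p}" "k2 \<in> {..<p}" "cv k1 = cv k2"
        have "(k1 + t) mod p = (k2 + t) mod p" using inj0 kk p0 unfolding cv_def by (auto simp: inj_on_def)
        then have "k1 mod p = k2 mod p" by (rule mod_cancel_nat)
        then show "k1 = k2" using kk by simp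
      qed
      have "rep_iso F phiV phiA (Gg E sp {..<p} (\<lambda>i. (i + p - 1) mod p) ((!) z)) (Gg_phiV E ((!) z)) (Gg_phiA ((!) z))"
        by (rule GD_iso[where S = cv, OF erg conn]) (use p0 injc CD in auto)
      moreover have "Fc E sp z = Gg E sp {..<p} (\<lambda>i. (i + p - 1) mod p) ((!) z)"
        using Fc_Gg[of z E sp] lz p0 by auto
      ultimately have "rep_iso F phiV phiA (Fc E sp z) (Fc_phiV E z) (Fc_phiA z)"
        by (simp add: Fc_phiV_Gg Fc_phiA_Gg)
      then show ?thesis using z(1) by blast
    qed
  qed
qed



theorem theorem5p17:
  fixes E :: "('a,'b) egraph" and sp :: "'a \<Rightarrow> 'b"
    and R :: "(nat \<Rightarrow> 'b dedge) set" and S :: "'b dedge list set"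
  assumes "egraph_wf E" and "row_finite E" and "special_choice E sp"
    and "R \<subseteq> Xinf E sp" and "\<forall>x\<in>Xinf E sp. \<exists>!z. z \<in> R \<and> inf_equiv x z"
    and "S \<subseteq> Xc E" and "\<forall>x\<in>Xc E. \<exists>!z. z \<in> S \<and> cyc_equiv x z"
  shows
    "(\<forall>v\<in>V0 E. ne_conn_erg E sp (Fv E sp v) (Fv_phiV E) Fv_phiA) \<and>
     (\<forall>x\<in>R. ne_conn_erg E sp (Finf E sp x) (Finf_phiV E x) (Finf_phiA x)) \<and>
     (\<forall>y\<in>S. ne_conn_erg E sp (Fc E sp y) (Fc_phiV E y) (Fc_phiA y)) \<and>
     (\<forall>(F :: ('v,'e) dgraph) phiV phiA. ne_conn_erg E sp F phiV phiA \<longrightarrow>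
        (\<exists>v\<in>V0 E. rep_iso F phiV phiA (Fv E sp v) (Fv_phiV E) Fv_phiA) \<or>
        (\<exists>x\<in>R. rep_iso F phiV phiA (Finf E sp x) (Finf_phiV E x) (Finf_phiA x)) \<or>
        (\<exists>y\<in>S. rep_iso F phiV phiA (Fc E sp y) (Fc_phiV E y) (Fc_phiA y))) \<and>
     (\<forall>v\<in>V0 E. \<forall>v'\<in>V0 E.
        rep_iso (Fv E sp v) (Fv_phiV E) Fv_phiA (Fv E sp v') (Fv_phiV E) Fv_phiA \<longrightarrow> v = v') \<and>
     (\<forall>x\<in>R. \<forall>x'\<in>R.
        rep_iso (Finf E sp x) (Finf_phiV E x) (Finf_phiA x) (Finf E sp x') (Finf_phiV E x') (Finf_phiA x')
        \<longrightarrow> x = x') \<and>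
     (\<forall>y\<in>S. \<forall>y'\<in>S.
        rep_iso (Fc E sp y) (Fc_phiV E y) (Fc_phiA y) (Fc E sp y') (Fc_phiV E y') (Fc_phiA y')
        \<longrightarrow> y = y') \<and>
     (\<forall>v\<in>V0 E. \<forall>x\<in>R.
        \<not> rep_iso (Fv E sp v) (Fv_phiV E) Fv_phiA (Finf E sp x) (Finf_phiV E x) (Finf_phiA x)) \<and>
     (\<forall>v\<in>V0 E. \<forall>y\<in>S.
        \<not> rep_iso (Fv E sp v) (Fv_phiV E) Fv_phiA (Fc E sp y) (Fc_phiV E y) (Fc_phiA y)) \<and>
     (\<forall>x\<in>R. \<forall>y\<in>S.
        \<not> rep_iso (Finf E sp x) (Finf_phiV E x) (Finf_phiA x) (Fc E sp y) (Fc_phiV E y) (Fc_phiA y))"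
proof -
  note wfE = assms(1)
  have yne: "y \<noteq> []" if "y \<in> S" for y using that assms(6) Xc_props(1) by blast
  have P1: "\<forall>v\<in>V0 E. ne_conn_erg E sp (Fv E sp v) (Fv_phiV E) Fv_phiA"
    using FV_ne_conn[OF wfE] by blast
  have P2: "\<forall>x\<in>R. ne_conn_erg E sp (Finf E sp x) (Finf_phiV E x) (Finf_phiA x)"
    using Finf_ne_conn[OF wfE] assms(4) by blast
  have P3: "\<forall>y\<in>S. ne_conn_erg E sp (Fc E sp y) (Fc_phiV E y) (Fc_phiA y)"
    using Fc_ne_conn[OF wfE] assms(6) by blast
  have P4: "\<forall>(F :: ('v,'e) dgraph) phiV phiA. ne_conn_erg E sp F phiV phiA \<longrightarrow>
        (\<exists>v\<in>V0 E. rep_iso F phiV phiA (Fv E sp v) (Fv_phiV E) Fv_phiA) \<or>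
        (\<exists>x\<in>R. rep_iso F phiV phiA (Finf E sp x) (Finf_phiV E x) (Finf_phiA x)) \<or>
        (\<exists>y\<in>S. rep_iso F phiV phiA (Fc E sp y) (Fc_phiV E y) (Fc_phiA y))"
    using classify[OF wfE assms(4,5,6,7)] by blast
  have P5: "\<forall>v\<in>V0 E. \<forall>v'\<in>V0 E.
        rep_iso (Fv E sp v) (Fv_phiV E) Fv_phiA (Fv E sp v') (Fv_phiV E) Fv_phiA \<longrightarrow> v = v'"
    using Fv_inj[OF wfE] by blast
  have P6: "\<forall>x\<in>R. \<forall>x'\<in>R.
        rep_iso (Finf E sp x) (Finf_phiV E x) (Finf_phiA x) (Finf E sp x') (Finf_phiV E x') (Finf_phiA x')
        \<longrightarrow> x = x'"
  proof (intro ballI impI)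
    fix x x' assume x: "x \<in> R" and x': "x' \<in> R"
      and iso: "rep_iso (Finf E sp x) (Finf_phiV E x) (Finf_phiA x) (Finf E sp x') (Finf_phiV E x') (Finf_phiA x')"
    have "inf_equiv x x'" using Ginf_equiv iso by (simp add: Finf_Gg Finf_phiV_Gg Finf_phiA_Gg)
    moreover have "inf_equiv x x" unfolding inf_equiv_def by (intro exI[of _ 0]) simp
    moreover have "x \<in> Xinf E sp" using x assms(4) by blast
    ultimately show "x = x'" using assms(5) x x' by blast
  qed
  have P7: "\<forall>y\<in>S. \<forall>y'\<in>S.
        rep_iso (Fc E sp y) (Fc_phiV E y) (Fc_phiA y) (Fc E sp y') (Fc_phiV E y') (Fc_phiA y')
        \<longrightarrow> y = y'"
  proof (intro ballI impI)
    fix y y' assume y: "y \<in> S" and y': "y' \<in> S"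
      and iso: "rep_iso (Fc E sp y) (Fc_phiV E y) (Fc_phiA y) (Fc E sp y') (Fc_phiV E y') (Fc_phiA y')"
    have n1: "0 < length y" "0 < length y'" using yne y y' by auto
    have "cyc_equiv y y'"
      by (rule Gc_equiv[OF n1], fold Fc_phiV_Gg Fc_phiA_Gg Fc_Gg[OF yne[OF y]] Fc_Gg[OF yne[OF y']]) (rule iso)
    moreover have "cyc_equiv y y" unfolding cyc_equiv_def using n1 by (intro exI[of _ "length y"]) (simp add: Suc_le_eq)
    moreover have "y \<in> Xc E" using y assms(6) by blast
    ultimately show "y = y'" using assms(7) y y' by blast
  qed
  have P8: "\<forall>v\<in>V0 E. \<forall>x\<in>R.
        \<not> rep_iso (Fv E sp v) (Fv_phiV E) Fv_phiA (Finf E sp x) (Finf_phiV E x) (Finf_phiA x)"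
    using Fv_not_Gg[OF wfE] by (simp add: Finf_Gg Finf_phiV_Gg Finf_phiA_Gg)
  have P9: "\<forall>v\<in>V0 E. \<forall>y\<in>S.
        \<not> rep_iso (Fv E sp v) (Fv_phiV E) Fv_phiA (Fc E sp y) (Fc_phiV E y) (Fc_phiA y)"
  proof (intro ballI)
    fix v y assume v: "v \<in> V0 E" and y: "y \<in> S"
    show "\<not> rep_iso (Fv E sp v) (Fv_phiV E) Fv_phiA (Fc E sp y) (Fc_phiV E y) (Fc_phiA y)"
      unfolding Fc_Gg[OF yne[OF y]] Fc_phiV_Gg Fc_phiA_Gg by (rule Fv_not_Gg[OF wfE v])
  qed
  have P10: "\<forall>x\<in>R. \<forall>y\<in>S.
        \<not> rep_iso (Finf E sp x) (Finf_phiV E x) (Finf_phiA x) (Fc E sp y) (Fc_phiV E y) (Fc_phiA y)"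
  proof (intro ballI)
    fix x y assume x: "x \<in> R" and y: "y \<in> S"
    have n: "0 < length y" using yne y by auto
    show "\<not> rep_iso (Finf E sp x) (Finf_phiV E x) (Finf_phiA x) (Fc E sp y) (Fc_phiV E y) (Fc_phiA y)"
      unfolding Fc_Gg[OF yne[OF y]] Fc_phiV_Gg Fc_phiA_Gg Finf_Gg Finf_phiV_Gg Finf_phiA_Gg
      by (rule Ginf_not_Gc[OF n])
  qed
  show ?thesis using P1 P2 P3 P4 P5 P6 P7 P8 P9 P10 by blast
qed


end
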